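(* Let $\mathcal K$ be a 2-category which admits Eilenberg–Moore constructions for monads and in which idempotent 2-cells split, and let $(t,\mu,\eta)$ on $k$ and $(t',\mu',\eta')$ on $k'$ be monads in $\mathcal K$. Then (1) the category $\mathrm{Lift}^\iota(t,t')$ is equivalent to the hom-category $\mathrm{Mnd}^\iota(\mathcal K)(t,t')$; (2) the category $\mathrm{Lift}^\pi(t,t')$ is equivalent to the hom-category $\mathrm{Mnd}^\pi(\mathcal K)(t,t')$. For $t=t'$ these equivalences are strong monoidal, where $\mathrm{Lift}^{\iota}(t,t)$ and $\mathrm{Lift}^{\pi}(t,t)$ carry the monoidal structure induced by horizontal composition in $\mathcal K$ and the hom-categories carry the monoidal structure given by horizontal composition.
   Context: Conventions in a 2-category $\mathcal K$: horizontal composition and whiskering by juxtaposition in the order of functor composition; identity 1-cell of $k$ written $k$, identity 2-cell of $V$ written $V$; vertical composition $\ast$ with $\alpha\ast\beta$ meaning $\beta$ then $\alpha$. Monads $(t,\mu,\eta)$ on $k$ are associative and unital. $\mathcal K$ admits Eilenberg–Moore constructions for monads: the inclusion 2-functor from $\mathcal K$ to the Lack–Street 2-category $\mathrm{EM}(\mathcal K)$ of monads has a right 2-adjoint $J$; each monad $(t,\mu,\eta)$ gives an adjunction $f\dashv v$, $f:k\to J(t)$, $v:J(t)\to k$, unit $\eta$, counit $\epsilon$, with $t=vf$, $\mu=v\epsilon f$ (for $t'$: $f',v',\eta',\epsilon'$). Idempotent 2-cells split (each idempotent $e$ factors as $e=\iota\ast\pi$ with $\pi\ast\iota$ an identity).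 Hom-categories: $\mathrm{Mnd}^\iota(\mathcal K)(t,t')$ has objects pairs $(V,\psi)$ with $V:k\to k'$, $\psi:t'V\Rightarrow Vt$, $V\mu\ast\psi t\ast t'\psi=\psi\ast\mu'V$; morphisms $(V,\psi)\to(W,\phi)$ are 2-cells $\omega:V\Rightarrow W$ of $\mathcal K$ with $\omega t\ast\psi=W\mu\ast\phi t\ast t'\omega t\ast t'\psi\ast t'\eta'V$; composition is vertical composition in $\mathcal K$. $\mathrm{Mnd}^\pi(\mathcal K)(t,t')$ has the same objects and morphisms the 2-cells $\omega:V\Rightarrow W$ with $\phi\ast t'\omega=W\mu\ast\phi t\ast\eta'Wt\ast\omega t\ast\psi$. For $t=t'$ their monoidal product is $(V',\psi')\otimes(V,\psi)=(V'V,V'\psi\ast\psi'V)$, $\omega'\otimes\omega=\omega'\omega$, with unit $(k,t)$. Weak liftings: a weak lifting of a 1-cell $V:k\to k'$ for $t,t'$ is $(V,\overline V,\iota,\pi)$ with $\overline V:J(t)\to J(t')$, $\iota:v'\overline V\Rightarrow Vv$ and $\pi:Vv\Rightarrow v'\overline V$ with $\pi\ast\iota$ the identity. For weak liftings $(V,\overline V,\iota,\pi)$, $(W,\overline W,\iota,\pi)$ and $\omega:V\Rightarrow W$, a weak $\iota$-lifting of $\omega$ is $\overline\omega:\overline V\Rightarrow\overline W$ with $\iota\ast v'\overline\omega=\omega v\ast\iota$; a weak $\pi$-lifting is $\overline\omega$ with $v'\overline\omega\ast\pi=\pi\ast\omega v$. $\mathrm{Lift}^\iota(t,t')$ (resp.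 $\mathrm{Lift}^\pi(t,t')$) has as objects the weak liftings $(V,\overline V,\iota,\pi)$ and as morphisms $(V,\overline V,\iota,\pi)\to(W,\overline W,\iota,\pi)$ the pairs $(\omega,\overline\omega)$ with $\omega:V\Rightarrow W$ in $\mathcal K$ and $\overline\omega$ a weak $\iota$-lifting (resp. weak $\pi$-lifting) of $\omega$; composition is componentwise vertical composition. For $t=t'$ the monoidal structure induced by horizontal composition is $(V',\overline{V'},\iota',\pi')\otimes(V,\overline V,\iota,\pi)=(V'V,\overline{V'}\,\overline V,V'\iota\ast\iota'\overline V,\pi'\overline V\ast V'\pi)$, $(\omega',\overline{\omega'})\otimes(\omega,\overline\omega)=(\omega'\omega,\overline{\omega'}\,\overline\omega)$, unit $(k,J(t),v,v)$. *)

theory Defs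
  imports Main
begin

text \<open>A (strict) 2-category with carrier sets of objects, 1-cells and 2-cells.
  comp1 g f is g after f; vcomp a b is "a * b" (b first); hcomp a b is juxtaposition a b.\<close>

record ('o,'m,'c) twocat =
  obj :: "'o set"
  arr :: "'m set"
  cell :: "'c set"
  src1 :: "'m \<Rightarrow> 'o"
  tgt1 :: "'m \<Rightarrow> 'o"
  src2 :: "'c \<Rightarrow> 'm"
  tgt2 :: "'c \<Rightarrow> 'm"
  id1 :: "'o \<Rightarrow> 'm"
  id2 :: "'m \<Rightarrow> 'c"
  comp1 :: "'m \<Rightarrow> 'm \<Rightarrow> 'm"
  vcomp :: "'c \<Rightarrow> 'c \<Rightarrow> 'c"
  hcomp :: "'c \<Rightarrow> 'c \<Rightarrow> 'c"

definition hom1 :: "('o,'m,'c,'z) twocat_scheme \<Rightarrow> 'o \<Rightarrow> 'o \<Rightarrow> 'm set" where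
  "hom1 K x y = {f \<in> arr K. src1 K f = x \<and> tgt1 K f = y}"

definition hom2 :: "('o,'m,'c,'z) twocat_scheme \<Rightarrow> 'm \<Rightarrow> 'm \<Rightarrow> 'c set" where
  "hom2 K f g = {a \<in> cell K. src2 K a = f \<and> tgt2 K a = g}"

definition twocat :: "('o,'m,'c) twocat \<Rightarrow> bool" where
  "twocat K \<longleftrightarrow>
    (\<forall>f\<in>arr K. src1 K f \<in> obj K \<and> tgt1 K f \<in> obj K) \<and>
    (\<forall>x\<in>obj K. id1 K x \<in> hom1 K x x) \<and>
    (\<forall>f\<in>arr K. \<forall>g\<in>arr K. src1 K g = tgt1 K f \<longrightarrow>
        comp1 K g f \<in> hom1 K (src1 K f) (tgt1 K g)) \<and>
    (\<forall>f\<in>arr K. \<forall>g\<in>arr K. \<forall>h\<in>arr K. src1 K h = tgt1 K g \<and> src1 K g = tgt1 K f \<longrightarrow>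
        comp1 K (comp1 K h g) f = comp1 K h (comp1 K g f)) \<and>
    (\<forall>f\<in>arr K. comp1 K (id1 K (tgt1 K f)) f = f \<and> comp1 K f (id1 K (src1 K f)) = f) \<and>
    (\<forall>a\<in>cell K. src2 K a \<in> arr K \<and> tgt2 K a \<in> arr K \<and>
        src1 K (src2 K a) = src1 K (tgt2 K a) \<and> tgt1 K (src2 K a) = tgt1 K (tgt2 K a)) \<and>
    (\<forall>f\<in>arr K. id2 K f \<in> hom2 K f f) \<and>
    (\<forall>a\<in>cell K. \<forall>b\<in>cell K. src2 K a = tgt2 K b \<longrightarrow>
        vcomp K a b \<in> hom2 K (src2 K b) (tgt2 K a)) \<and>
    (\<forall>a\<in>cell K. \<forall>b\<in>cell K. \<forall>c\<in>cell K. src2 K a = tgt2 K b \<and> src2 K b = tgt2 K c \<longrightarrow>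
        vcomp K (vcomp K a b) c = vcomp K a (vcomp K b c)) \<and>
    (\<forall>a\<in>cell K. vcomp K (id2 K (tgt2 K a)) a = a \<and> vcomp K a (id2 K (src2 K a)) = a) \<and>
    (\<forall>a\<in>cell K. \<forall>b\<in>cell K. src1 K (src2 K a) = tgt1 K (src2 K b) \<longrightarrow>
        hcomp K a b \<in> hom2 K (comp1 K (src2 K a) (src2 K b)) (comp1 K (tgt2 K a) (tgt2 K b))) \<and>
    (\<forall>a\<in>cell K. \<forall>b\<in>cell K. \<forall>c\<in>cell K.
        src1 K (src2 K a) = tgt1 K (src2 K b) \<and> src1 K (src2 K b) = tgt1 K (src2 K c) \<longrightarrow>
        hcomp K (hcomp K a b) c = hcomp K a (hcomp K b c)) \<and>
    (\<forall>a\<in>cell K. hcomp K (id2 K (id1 K (tgt1 K (src2 K a)))) a = a \<and>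
                 hcomp K a (id2 K (id1 K (src1 K (src2 K a)))) = a) \<and>
    (\<forall>f\<in>arr K. \<forall>g\<in>arr K. src1 K g = tgt1 K f \<longrightarrow>
        hcomp K (id2 K g) (id2 K f) = id2 K (comp1 K g f)) \<and>
    (\<forall>a\<in>cell K. \<forall>a'\<in>cell K. \<forall>b\<in>cell K. \<forall>b'\<in>cell K.
        src2 K a = tgt2 K a' \<and> src2 K b = tgt2 K b' \<and> src1 K (src2 K a) = tgt1 K (src2 K b) \<longrightarrow>
        hcomp K (vcomp K a a') (vcomp K b b') = vcomp K (hcomp K a b) (hcomp K a' b'))"

definition wl :: "('o,'m,'c) twocat \<Rightarrow> 'm \<Rightarrow> 'c \<Rightarrow> 'c" where
  "wl K f a = hcomp K (id2 K f) a"
definition wr :: "('o,'m,'c) twocat \<Rightarrow> 'c \<Rightarrow> 'm \<Rightarrow> 'c" where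
  "wr K a f = hcomp K a (id2 K f)"

definition idempotents_split :: "('o,'m,'c) twocat \<Rightarrow> bool" where
  "idempotents_split K \<longleftrightarrow>
    (\<forall>e\<in>cell K. src2 K e = tgt2 K e \<and> vcomp K e e = e \<longrightarrow>
      (\<exists>W \<iota> \<pi>. W \<in> arr K \<and> \<iota> \<in> hom2 K W (tgt2 K e) \<and> \<pi> \<in> hom2 K (src2 K e) W \<and>
               vcomp K \<iota> \<pi> = e \<and> vcomp K \<pi> \<iota> = id2 K W))"

definition is_monad :: "('o,'m,'c) twocat \<Rightarrow> 'o \<Rightarrow> 'm \<Rightarrow> 'c \<Rightarrow> 'c \<Rightarrow> bool" where
  "is_monad K k t \<mu> \<eta> \<longleftrightarrow> k \<in> obj K \<and> t \<in> hom1 K k k \<and>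
     \<mu> \<in> hom2 K (comp1 K t t) t \<and> \<eta> \<in> hom2 K (id1 K k) t \<and>
     vcomp K \<mu> (wl K t \<mu>) = vcomp K \<mu> (wr K \<mu> t) \<and>
     vcomp K \<mu> (wl K t \<eta>) = id2 K t \<and> vcomp K \<mu> (wr K \<eta> t) = id2 K t"

text \<open>t-algebras in K(x,k), i.e. 1-cells (x,identity monad) to (k,t) of the Lack--Street
  2-category EM(K).\<close>
definition is_alg :: "('o,'m,'c) twocat \<Rightarrow> 'o \<Rightarrow> 'm \<Rightarrow> 'c \<Rightarrow> 'c \<Rightarrow> 'o \<Rightarrow> 'm \<Rightarrow> 'c \<Rightarrow> bool" where
  "is_alg K k t \<mu> \<eta> x a \<alpha> \<longleftrightarrow> a \<in> hom1 K x k \<and> \<alpha> \<in> hom2 K (comp1 K t a) a \<and>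
     vcomp K \<alpha> (wl K t \<alpha>) = vcomp K \<alpha> (wr K \<mu> a) \<and> vcomp K \<alpha> (wr K \<eta> a) = id2 K a"

text \<open>(E,v,psi) is the value J(t) of the right 2-adjoint J of the inclusion K \<rightarrow> EM(K) at t,
  together with the counit component (v,psi): (E,identity monad) \<rightarrow> (k,t):
  composition with it is an isomorphism of categories K(x,E) \<cong> EM(K)((x,1),(k,t)).\<close>
definition is_EM :: "('o,'m,'c) twocat \<Rightarrow> 'o \<Rightarrow> 'm \<Rightarrow> 'c \<Rightarrow> 'c \<Rightarrow> 'o \<Rightarrow> 'm \<Rightarrow> 'c \<Rightarrow> bool" where
  "is_EM K k t \<mu> \<eta> E v \<psi> \<longleftrightarrow> E \<in> obj K \<and> is_alg K k t \<mu> \<eta> E v \<psi> \<and>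
    (\<forall>x\<in>obj K.
      (\<forall>a \<alpha>. is_alg K k t \<mu> \<eta> x a \<alpha> \<longrightarrow>
         (\<exists>!g. g \<in> hom1 K x E \<and> comp1 K v g = a \<and> wr K \<psi> g = \<alpha>)) \<and>
      (\<forall>g\<in>hom1 K x E. \<forall>h\<in>hom1 K x E. \<forall>\<rho>\<in>hom2 K (comp1 K v g) (comp1 K v h).
         vcomp K (wr K \<psi> h) (wl K t \<rho>) = vcomp K \<rho> (wr K \<psi> g) \<longrightarrow>
         (\<exists>!\<theta>. \<theta> \<in> hom2 K g h \<and> wl K v \<theta> = \<rho>)))"

definition admits_EM :: "('o,'m,'c) twocat \<Rightarrow> bool" where
  "admits_EM K \<longleftrightarrow> (\<forall>k t \<mu> \<eta>. is_monad K k t \<mu> \<eta> \<longrightarrow> (\<exists>E v \<psi>. is_EM K k t \<mu> \<eta> E v \<psi>))"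

record ('ob,'ar) category =
  cobj :: "'ob set"
  chom :: "'ob \<Rightarrow> 'ob \<Rightarrow> 'ar set"
  ccomp :: "'ar \<Rightarrow> 'ar \<Rightarrow> 'ar"
  cid :: "'ob \<Rightarrow> 'ar"

definition is_functor :: "('a,'b) category \<Rightarrow> ('c,'d) category \<Rightarrow> ('a \<Rightarrow> 'c) \<Rightarrow> ('a \<Rightarrow> 'a \<Rightarrow> 'b \<Rightarrow> 'd) \<Rightarrow> bool" where
  "is_functor C D Fo Fm \<longleftrightarrow>
    (\<forall>A\<in>cobj C. Fo A \<in> cobj D) \<and>
    (\<forall>A\<in>cobj C. \<forall>B\<in>cobj C. \<forall>f\<in>chom C A B. Fm A B f \<in> chom D (Fo A) (Fo B)) \<and>
    (\<forall>A\<in>cobj C. \<forall>B\<in>cobj C. \<forall>X\<in>cobj C. \<forall>f\<in>chom C A B. \<forall>g\<in>chom C B X.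
        Fm A X (ccomp C g f) = ccomp D (Fm B X g) (Fm A B f)) \<and>
    (\<forall>A\<in>cobj C. Fm A A (cid C A) = cid D (Fo A))"

definition is_iso :: "('a,'b) category \<Rightarrow> 'a \<Rightarrow> 'a \<Rightarrow> 'b \<Rightarrow> bool" where
  "is_iso D A B f \<longleftrightarrow> f \<in> chom D A B \<and>
     (\<exists>g\<in>chom D B A. ccomp D g f = cid D A \<and> ccomp D f g = cid D B)"

definition nat_iso :: "('a,'b) category \<Rightarrow> ('c,'d) category \<Rightarrow> ('a \<Rightarrow> 'c) \<Rightarrow> ('a \<Rightarrow> 'a \<Rightarrow> 'b \<Rightarrow> 'd)
    \<Rightarrow> ('a \<Rightarrow> 'c) \<Rightarrow> ('a \<Rightarrow> 'a \<Rightarrow> 'b \<Rightarrow> 'd) \<Rightarrow> ('a \<Rightarrow> 'd) \<Rightarrow> bool" where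
  "nat_iso C D Fo Fm Go Gm \<tau> \<longleftrightarrow>
    (\<forall>A\<in>cobj C. is_iso D (Fo A) (Go A) (\<tau> A)) \<and>
    (\<forall>A\<in>cobj C. \<forall>B\<in>cobj C. \<forall>f\<in>chom C A B.
        ccomp D (Gm A B f) (\<tau> A) = ccomp D (\<tau> B) (Fm A B f))"

definition is_equivalence :: "('a,'b) category \<Rightarrow> ('c,'d) category \<Rightarrow> ('a \<Rightarrow> 'c) \<Rightarrow> ('a \<Rightarrow> 'a \<Rightarrow> 'b \<Rightarrow> 'd) \<Rightarrow> bool" where
  "is_equivalence C D Fo Fm \<longleftrightarrow> is_functor C D Fo Fm \<and>
    (\<exists>Go Gm \<sigma> \<tau>. is_functor D C Go Gm \<and>
       nat_iso C C (\<lambda>A. A) (\<lambda>A B f. f) (\<lambda>A. Go (Fo A)) (\<lambda>A B f. Gm (Fo A) (Fo B) (Fm A B f)) \<sigma> \<and>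
       nat_iso D D (\<lambda>A. Fo (Go A)) (\<lambda>A B f. Fm (Go A) (Go B) (Gm A B f)) (\<lambda>A. A) (\<lambda>A B f. f) \<tau>)"

definition equivalent_cats :: "('a,'b) category \<Rightarrow> ('c,'d) category \<Rightarrow> bool" where
  "equivalent_cats C D \<longleftrightarrow> (\<exists>Fo Fm. is_equivalence C D Fo Fm)"

text \<open>Strong monoidal functors between strict monoidal categories, given by a tensor on
  objects TC, a tensor on morphisms TaC and a unit object IC (the structures below are strict
  since horizontal composition in a strict 2-category is strictly associative and unital).\<close>
definition strong_monoidal ::
  "('a,'b) category \<Rightarrow> ('a \<Rightarrow> 'a \<Rightarrow> 'a) \<Rightarrow> ('b \<Rightarrow> 'b \<Rightarrow> 'b) \<Rightarrow> 'a \<Rightarrow>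
   ('c,'d) category \<Rightarrow> ('c \<Rightarrow> 'c \<Rightarrow> 'c) \<Rightarrow> ('d \<Rightarrow> 'd \<Rightarrow> 'd) \<Rightarrow> 'c \<Rightarrow>
   ('a \<Rightarrow> 'c) \<Rightarrow> ('a \<Rightarrow> 'a \<Rightarrow> 'b \<Rightarrow> 'd) \<Rightarrow> bool" where
  "strong_monoidal C TC TaC IC D TD TaD ID Fo Fm \<longleftrightarrow>
    (\<exists>\<phi>0 \<phi>2. is_iso D ID (Fo IC) \<phi>0 \<and>
      (\<forall>A\<in>cobj C. \<forall>B\<in>cobj C. is_iso D (TD (Fo A) (Fo B)) (Fo (TC A B)) (\<phi>2 A B)) \<and>
      (\<forall>A\<in>cobj C. \<forall>B\<in>cobj C. \<forall>A'\<in>cobj C. \<forall>B'\<in>cobj C. \<forall>f\<in>chom C A A'. \<forall>g\<in>chom C B B'.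
         ccomp D (Fm (TC A B) (TC A' B') (TaC f g)) (\<phi>2 A B) =
         ccomp D (\<phi>2 A' B') (TaD (Fm A A' f) (Fm B B' g))) \<and>
      (\<forall>A\<in>cobj C. \<forall>B\<in>cobj C. \<forall>X\<in>cobj C.
         ccomp D (\<phi>2 (TC A B) X) (TaD (\<phi>2 A B) (cid D (Fo X))) =
         ccomp D (\<phi>2 A (TC B X)) (TaD (cid D (Fo A)) (\<phi>2 B X))) \<and>
      (\<forall>A\<in>cobj C. ccomp D (\<phi>2 IC A) (TaD \<phi>0 (cid D (Fo A))) = cid D (Fo A) \<and>
                   ccomp D (\<phi>2 A IC) (TaD (cid D (Fo A)) \<phi>0) = cid D (Fo A)))"

definition monoidally_equivalent ::
  "('a,'b) category \<Rightarrow> ('a \<Rightarrow> 'a \<Rightarrow> 'a) \<Rightarrow> ('b \<Rightarrow> 'b \<Rightarrow> 'b) \<Rightarrow> 'a \<Rightarrow>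
   ('c,'d) category \<Rightarrow> ('c \<Rightarrow> 'c \<Rightarrow> 'c) \<Rightarrow> ('d \<Rightarrow> 'd \<Rightarrow> 'd) \<Rightarrow> 'c \<Rightarrow> bool" where
  "monoidally_equivalent C TC TaC IC D TD TaD ID \<longleftrightarrow>
    (\<exists>Fo Fm. is_equivalence C D Fo Fm \<and> strong_monoidal C TC TaC IC D TD TaD ID Fo Fm)"

definition mnd_obj :: "('o,'m,'c) twocat \<Rightarrow> 'o \<Rightarrow> 'm \<Rightarrow> 'c \<Rightarrow> 'o \<Rightarrow> 'm \<Rightarrow> 'c \<Rightarrow> ('m \<times> 'c) set" where
  "mnd_obj K k t \<mu> k' t' \<mu>' = {(V,\<psi>). V \<in> hom1 K k k' \<and>
      \<psi> \<in> hom2 K (comp1 K t' V) (comp1 K V t) \<and>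
      vcomp K (wl K V \<mu>) (vcomp K (wr K \<psi> t) (wl K t' \<psi>)) = vcomp K \<psi> (wr K \<mu>' V)}"

definition MndI :: "('o,'m,'c) twocat \<Rightarrow> 'o \<Rightarrow> 'm \<Rightarrow> 'c \<Rightarrow> 'c \<Rightarrow> 'o \<Rightarrow> 'm \<Rightarrow> 'c \<Rightarrow> 'c
     \<Rightarrow> ('m \<times> 'c, 'c) category" where
  "MndI K k t \<mu> \<eta> k' t' \<mu>' \<eta>' =
    \<lparr> cobj = mnd_obj K k t \<mu> k' t' \<mu>',
      chom = (\<lambda>(V,\<psi>) (W,\<phi>). {\<omega> \<in> hom2 K V W.
         vcomp K (wr K \<omega> t) \<psi> =
         vcomp K (wl K W \<mu>) (vcomp K (wr K \<phi> t) (vcomp K (wl K t' (wr K \<omega> t))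
           (vcomp K (wl K t' \<psi>) (wl K t' (wr K \<eta>' V)))))}),
      ccomp = vcomp K,
      cid = (\<lambda>(V,\<psi>). id2 K V) \<rparr>"

definition MndP :: "('o,'m,'c) twocat \<Rightarrow> 'o \<Rightarrow> 'm \<Rightarrow> 'c \<Rightarrow> 'c \<Rightarrow> 'o \<Rightarrow> 'm \<Rightarrow> 'c \<Rightarrow> 'c
     \<Rightarrow> ('m \<times> 'c, 'c) category" where
  "MndP K k t \<mu> \<eta> k' t' \<mu>' \<eta>' =
    \<lparr> cobj = mnd_obj K k t \<mu> k' t' \<mu>',
      chom = (\<lambda>(V,\<psi>) (W,\<phi>). {\<omega> \<in> hom2 K V W.
         vcomp K \<phi> (wl K t' \<omega>) =
         vcomp K (wl K W \<mu>) (vcomp K (wr K \<phi> t) (vcomp K (wr K (wr K \<eta>' W) t)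
           (vcomp K (wr K \<omega> t) \<psi>)))}),
      ccomp = vcomp K,
      cid = (\<lambda>(V,\<psi>). id2 K V) \<rparr>"

definition mnd_tensor :: "('o,'m,'c) twocat \<Rightarrow> 'm \<times> 'c \<Rightarrow> 'm \<times> 'c \<Rightarrow> 'm \<times> 'c" where
  "mnd_tensor K = (\<lambda>(V',\<psi>') (V,\<psi>). (comp1 K V' V, vcomp K (wl K V' \<psi>) (wr K \<psi>' V)))"
definition mnd_unit :: "('o,'m,'c) twocat \<Rightarrow> 'o \<Rightarrow> 'm \<Rightarrow> 'm \<times> 'c" where
  "mnd_unit K k t = (id1 K k, id2 K t)"

text \<open>Weak liftings of 1-cells k \<rightarrow> k' for t,t', with E = J(t), v, E' = J(t'), v'.\<close>
definition lift_obj :: "('o,'m,'c) twocat \<Rightarrow> 'o \<Rightarrow> 'o \<Rightarrow> 'm \<Rightarrow> 'o \<Rightarrow> 'o \<Rightarrow> 'm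
    \<Rightarrow> ('m \<times> 'm \<times> 'c \<times> 'c) set" where
  "lift_obj K k E v k' E' v' = {(V, Vb, \<iota>, \<pi>). V \<in> hom1 K k k' \<and> Vb \<in> hom1 K E E' \<and>
      \<iota> \<in> hom2 K (comp1 K v' Vb) (comp1 K V v) \<and> \<pi> \<in> hom2 K (comp1 K V v) (comp1 K v' Vb) \<and>
      vcomp K \<pi> \<iota> = id2 K (comp1 K v' Vb)}"

definition LiftI :: "('o,'m,'c) twocat \<Rightarrow> 'o \<Rightarrow> 'o \<Rightarrow> 'm \<Rightarrow> 'o \<Rightarrow> 'o \<Rightarrow> 'm
    \<Rightarrow> ('m \<times> 'm \<times> 'c \<times> 'c, 'c \<times> 'c) category" where
  "LiftI K k E v k' E' v' =
    \<lparr> cobj = lift_obj K k E v k' E' v',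
      chom = (\<lambda>(V, Vb, \<iota>1, \<pi>1) (W, Wb, \<iota>2, \<pi>2). {(\<omega>, \<omega>b).
         \<omega> \<in> hom2 K V W \<and> \<omega>b \<in> hom2 K Vb Wb \<and>
         vcomp K \<iota>2 (wl K v' \<omega>b) = vcomp K (wr K \<omega> v) \<iota>1}),
      ccomp = (\<lambda>(\<omega>, \<omega>b) (\<omega>', \<omega>b'). (vcomp K \<omega> \<omega>', vcomp K \<omega>b \<omega>b')),
      cid = (\<lambda>(V, Vb, \<iota>, \<pi>). (id2 K V, id2 K Vb)) \<rparr>"

definition LiftP :: "('o,'m,'c) twocat \<Rightarrow> 'o \<Rightarrow> 'o \<Rightarrow> 'm \<Rightarrow> 'o \<Rightarrow> 'o \<Rightarrow> 'm
    \<Rightarrow> ('m \<times> 'm \<times> 'c \<times> 'c, 'c \<times> 'c) category" where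
  "LiftP K k E v k' E' v' =
    \<lparr> cobj = lift_obj K k E v k' E' v',
      chom = (\<lambda>(V, Vb, \<iota>1, \<pi>1) (W, Wb, \<iota>2, \<pi>2). {(\<omega>, \<omega>b).
         \<omega> \<in> hom2 K V W \<and> \<omega>b \<in> hom2 K Vb Wb \<and>
         vcomp K (wl K v' \<omega>b) \<pi>1 = vcomp K \<pi>2 (wr K \<omega> v)}),
      ccomp = (\<lambda>(\<omega>, \<omega>b) (\<omega>', \<omega>b'). (vcomp K \<omega> \<omega>', vcomp K \<omega>b \<omega>b')),
      cid = (\<lambda>(V, Vb, \<iota>, \<pi>). (id2 K V, id2 K Vb)) \<rparr>"

definition lift_tensor :: "('o,'m,'c) twocat \<Rightarrow> 'm \<times> 'm \<times> 'c \<times> 'c \<Rightarrow> 'm \<times> 'm \<times> 'c \<times> 'c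
    \<Rightarrow> 'm \<times> 'm \<times> 'c \<times> 'c" where
  "lift_tensor K = (\<lambda>(V', Vb', \<iota>', \<pi>') (V, Vb, \<iota>, \<pi>).
     (comp1 K V' V, comp1 K Vb' Vb, vcomp K (wl K V' \<iota>) (wr K \<iota>' Vb),
      vcomp K (wr K \<pi>' Vb) (wl K V' \<pi>)))"
definition lift_tensor_arr :: "('o,'m,'c) twocat \<Rightarrow> 'c \<times> 'c \<Rightarrow> 'c \<times> 'c \<Rightarrow> 'c \<times> 'c" where
  "lift_tensor_arr K = (\<lambda>(\<omega>', \<omega>b') (\<omega>, \<omega>b). (hcomp K \<omega>' \<omega>, hcomp K \<omega>b' \<omega>b))"
definition lift_unit :: "('o,'m,'c) twocat \<Rightarrow> 'o \<Rightarrow> 'o \<Rightarrow> 'm \<Rightarrow> 'm \<times> 'm \<times> 'c \<times> 'c" where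
  "lift_unit K k E v = (id1 K k, id1 K E, id2 K v, id2 K v)"

end

theory Submission
  imports Defs
begin


lemma equiv_ff_surj:
  fixes C :: "('a,'b) category" and D :: "('c,'d) category"
  assumes F: "is_functor C D Fo Fm"
  and full: "\<And>A B g. A \<in> cobj C \<Longrightarrow> B \<in> cobj C \<Longrightarrow> g \<in> chom D (Fo A) (Fo B) \<Longrightarrow> \<exists>f\<in>chom C A B. Fm A B f = g"
  and faithful: "\<And>A B f1 f2. A \<in> cobj C \<Longrightarrow> B \<in> cobj C \<Longrightarrow> f1 \<in> chom C A B \<Longrightarrow> f2 \<in> chom C A B \<Longrightarrow> Fm A B f1 = Fm A B f2 \<Longrightarrow> f1 = f2"
  and surj: "\<And>Y. Y \<in> cobj D \<Longrightarrow> \<exists>A\<in>cobj C. Fo A = Y"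
  and Cid: "\<And>A. A \<in> cobj C \<Longrightarrow> cid C A \<in> chom C A A"
  and Ccomp: "\<And>A B X f g. A \<in> cobj C \<Longrightarrow> B \<in> cobj C \<Longrightarrow> X \<in> cobj C \<Longrightarrow> f \<in> chom C A B \<Longrightarrow> g \<in> chom C B X \<Longrightarrow> ccomp C g f \<in> chom C A X"
  and Dl: "\<And>X Y g. X \<in> cobj D \<Longrightarrow> Y \<in> cobj D \<Longrightarrow> g \<in> chom D X Y \<Longrightarrow> ccomp D (cid D Y) g = g \<and> ccomp D g (cid D X) = g"
  shows "is_equivalence C D Fo Fm"
proof -
  note Fd = F[unfolded is_functor_def]
  have Fo_obj: "\<And>A. A \<in> cobj C \<Longrightarrow> Fo A \<in> cobj D" using Fd by blast
  have Fm_hom: "\<And>A B f. A \<in> cobj C \<Longrightarrow> B \<in> cobj C \<Longrightarrow> f \<in> chom C A B \<Longrightarrow> Fm A B f \<in> chom D (Fo A) (Fo B)" using Fd by blast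
  have Fm_comp: "\<And>A B X f g. A \<in> cobj C \<Longrightarrow> B \<in> cobj C \<Longrightarrow> X \<in> cobj C \<Longrightarrow> f \<in> chom C A B \<Longrightarrow> g \<in> chom C B X \<Longrightarrow>
        Fm A X (ccomp C g f) = ccomp D (Fm B X g) (Fm A B f)" using Fd by blast
  have Fm_id: "\<And>A. A \<in> cobj C \<Longrightarrow> Fm A A (cid C A) = cid D (Fo A)" using Fd by blast
  have Did: "\<And>A. A \<in> cobj C \<Longrightarrow> cid D (Fo A) \<in> chom D (Fo A) (Fo A)"
  proof -
    fix A assume "A \<in> cobj C"
    with Fm_hom[OF this this Cid[OF this]] Fm_id[OF this] show "cid D (Fo A) \<in> chom D (Fo A) (Fo A)" by simp
  qed
  define Go where "Go Y = (SOME A. A \<in> cobj C \<and> Fo A = Y)" for Y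
  have Go: "\<And>Y. Y \<in> cobj D \<Longrightarrow> Go Y \<in> cobj C \<and> Fo (Go Y) = Y"
  proof -
    fix Y assume "Y \<in> cobj D"
    then have "\<exists>A. A \<in> cobj C \<and> Fo A = Y" using surj by blast
    then show "Go Y \<in> cobj C \<and> Fo (Go Y) = Y" unfolding Go_def by (rule someI_ex)
  qed
  have uniq: "\<And>A B g. A \<in> cobj C \<Longrightarrow> B \<in> cobj C \<Longrightarrow> g \<in> chom D (Fo A) (Fo B) \<Longrightarrow> \<exists>!f. f \<in> chom C A B \<and> Fm A B f = g"
  proof -
    fix A B g assume h: "A \<in> cobj C" "B \<in> cobj C" "g \<in> chom D (Fo A) (Fo B)"
    from full[OF h] obtain f where "f \<in> chom C A B" "Fm A B f = g" by blast
    then show "\<exists>!f. f \<in> chom C A B \<and> Fm A B f = g"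
      by (intro ex1I[of _ f]) (simp, metis faithful[OF h(1,2)])
  qed
  have the1: "\<And>A B g. A \<in> cobj C \<Longrightarrow> B \<in> cobj C \<Longrightarrow> g \<in> chom D (Fo A) (Fo B) \<Longrightarrow>
     (THE f. f \<in> chom C A B \<and> Fm A B f = g) \<in> chom C A B \<and> Fm A B (THE f. f \<in> chom C A B \<and> Fm A B f = g) = g"
    by (rule theI', rule uniq)
  have the2: "\<And>A B g f. A \<in> cobj C \<Longrightarrow> B \<in> cobj C \<Longrightarrow> f \<in> chom C A B \<Longrightarrow> Fm A B f = g \<Longrightarrow>
     (THE f. f \<in> chom C A B \<and> Fm A B f = g) = f"
  proof -
    fix A B g f assume h: "A \<in> cobj C" "B \<in> cobj C" "f \<in> chom C A B" "Fm A B f = g"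
    show "(THE f. f \<in> chom C A B \<and> Fm A B f = g) = f"
    proof (rule the_equality)
      show "f \<in> chom C A B \<and> Fm A B f = g" using h by simp
      fix f' assume "f' \<in> chom C A B \<and> Fm A B f' = g"
      then show "f' = f" using faithful[OF h(1,2)] h by metis
    qed
  qed
  define Gm where "Gm Y Y' g = (THE f. f \<in> chom C (Go Y) (Go Y') \<and> Fm (Go Y) (Go Y') f = g)" for Y Y' g
  have Gm: "\<And>Y Y' g. Y \<in> cobj D \<Longrightarrow> Y' \<in> cobj D \<Longrightarrow> g \<in> chom D Y Y' \<Longrightarrow>
        Gm Y Y' g \<in> chom C (Go Y) (Go Y') \<and> Fm (Go Y) (Go Y') (Gm Y Y' g) = g"
  proof -
    fix Y Y' g assume h: "Y \<in> cobj D" "Y' \<in> cobj D" "g \<in> chom D Y Y'"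
    have "Go Y \<in> cobj C" "Go Y' \<in> cobj C" "g \<in> chom D (Fo (Go Y)) (Fo (Go Y'))" using Go h by auto
    from the1[OF this] show "Gm Y Y' g \<in> chom C (Go Y) (Go Y') \<and> Fm (Go Y) (Go Y') (Gm Y Y' g) = g"
      unfolding Gm_def .
  qed
  define \<sigma> where "\<sigma> A = (THE f. f \<in> chom C A (Go (Fo A)) \<and> Fm A (Go (Fo A)) f = cid D (Fo A))" for A
  define \<sigma>' where "\<sigma>' A = (THE f. f \<in> chom C (Go (Fo A)) A \<and> Fm (Go (Fo A)) A f = cid D (Fo A))" for A
  have sg: "\<And>A. A \<in> cobj C \<Longrightarrow> \<sigma> A \<in> chom C A (Go (Fo A)) \<and> Fm A (Go (Fo A)) (\<sigma> A) = cid D (Fo A)"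
  proof -
    fix A assume h: "A \<in> cobj C"
    have "A \<in> cobj C" "Go (Fo A) \<in> cobj C" "cid D (Fo A) \<in> chom D (Fo A) (Fo (Go (Fo A)))" using Go Fo_obj Did h by auto
    from the1[OF this] show "\<sigma> A \<in> chom C A (Go (Fo A)) \<and> Fm A (Go (Fo A)) (\<sigma> A) = cid D (Fo A)"
      unfolding \<sigma>_def .
  qed
  have sg': "\<And>A. A \<in> cobj C \<Longrightarrow> \<sigma>' A \<in> chom C (Go (Fo A)) A \<and> Fm (Go (Fo A)) A (\<sigma>' A) = cid D (Fo A)"
  proof -
    fix A assume h: "A \<in> cobj C"
    have "Go (Fo A) \<in> cobj C" "A \<in> cobj C" "cid D (Fo A) \<in> chom D (Fo (Go (Fo A))) (Fo A)" using Go Fo_obj Did h by auto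
    from the1[OF this] show "\<sigma>' A \<in> chom C (Go (Fo A)) A \<and> Fm (Go (Fo A)) A (\<sigma>' A) = cid D (Fo A)"
      unfolding \<sigma>'_def .
  qed
  have GF: "is_functor D C Go Gm"
    unfolding is_functor_def
  proof (intro conjI ballI)
    fix A assume "A \<in> cobj D" then show "Go A \<in> cobj C" using Go by blast
  next
    fix A B f assume "A \<in> cobj D" "B \<in> cobj D" "f \<in> chom D A B" then show "Gm A B f \<in> chom C (Go A) (Go B)" using Gm by blast
  next
    fix A B X f g assume h: "A \<in> cobj D" "B \<in> cobj D" "X \<in> cobj D" "f \<in> chom D A B" "g \<in> chom D B X"
    have GA: "Go A \<in> cobj C" "Go B \<in> cobj C" "Go X \<in> cobj C" using Go h by auto
    have c: "ccomp C (Gm B X g) (Gm A B f) \<in> chom C (Go A) (Go X)" using Ccomp GA Gm h by blast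
    have "Fm (Go A) (Go X) (ccomp C (Gm B X g) (Gm A B f)) = ccomp D g f"
      using Fm_comp[OF GA] Gm h by auto
    then show "Gm A X (ccomp D g f) = ccomp C (Gm B X g) (Gm A B f)"
      unfolding Gm_def[of A X] using the2 GA c by blast
  next
    fix A assume h: "A \<in> cobj D"
    have GA: "Go A \<in> cobj C" using Go h by auto
    show "Gm A A (cid D A) = cid C (Go A)"
      unfolding Gm_def using the2[OF GA GA Cid[OF GA]] Fm_id[OF GA] Go h by metis
  qed
  have N1: "nat_iso C C (\<lambda>A. A) (\<lambda>A B f. f) (\<lambda>A. Go (Fo A)) (\<lambda>A B f. Gm (Fo A) (Fo B) (Fm A B f)) \<sigma>"
    unfolding nat_iso_def is_iso_def
  proof (intro conjI ballI)
    fix A assume h: "A \<in> cobj C"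
    have GA: "Go (Fo A) \<in> cobj C" "Fo (Go (Fo A)) = Fo A" using Go Fo_obj h by auto
    show "\<sigma> A \<in> chom C A (Go (Fo A))" using sg h by blast
    have c1: "ccomp C (\<sigma>' A) (\<sigma> A) \<in> chom C A A" using Ccomp GA h sg sg' by blast
    have c2: "ccomp C (\<sigma> A) (\<sigma>' A) \<in> chom C (Go (Fo A)) (Go (Fo A))" using Ccomp GA h sg sg' by blast
    have e1: "ccomp C (\<sigma>' A) (\<sigma> A) = cid C A"
      apply (rule faithful[OF h h c1 Cid[OF h]])
      using Fm_comp[OF h GA(1) h] sg sg' h Fm_id Dl[OF Fo_obj[OF h] Fo_obj[OF h] Did[OF h]] GA by auto
    have e2: "ccomp C (\<sigma> A) (\<sigma>' A) = cid C (Go (Fo A))"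
      apply (rule faithful[OF GA(1) GA(1) c2 Cid[OF GA(1)]])
      using Fm_comp[OF GA(1) h GA(1)] sg sg' h Fm_id[OF GA(1)] Dl[OF Fo_obj[OF h] Fo_obj[OF h] Did[OF h]] GA by auto
    show "\<exists>g\<in>chom C (Go (Fo A)) A. ccomp C g (\<sigma> A) = cid C A \<and> ccomp C (\<sigma> A) g = cid C (Go (Fo A))"
      using sg' h e1 e2 by blast
  next
    fix A B f assume h: "A \<in> cobj C" "B \<in> cobj C" "f \<in> chom C A B"
    have GA: "Go (Fo A) \<in> cobj C" "Fo (Go (Fo A)) = Fo A" "Go (Fo B) \<in> cobj C" "Fo (Go (Fo B)) = Fo B" using Go Fo_obj h by auto
    have gm: "Gm (Fo A) (Fo B) (Fm A B f) \<in> chom C (Go (Fo A)) (Go (Fo B))"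
          "Fm (Go (Fo A)) (Go (Fo B)) (Gm (Fo A) (Fo B) (Fm A B f)) = Fm A B f"
      using Gm[OF Fo_obj[OF h(1)] Fo_obj[OF h(2)] Fm_hom[OF h]] by auto
    have c1: "ccomp C (Gm (Fo A) (Fo B) (Fm A B f)) (\<sigma> A) \<in> chom C A (Go (Fo B))" using Ccomp GA h sg gm by blast
    have c2: "ccomp C (\<sigma> B) f \<in> chom C A (Go (Fo B))" using Ccomp GA h sg by blast
    have "Fm A (Go (Fo B)) (ccomp C (Gm (Fo A) (Fo B) (Fm A B f)) (\<sigma> A)) = Fm A B f"
      using Fm_comp[OF h(1) GA(1) GA(3)] sg gm h Dl[OF Fo_obj[OF h(1)] Fo_obj[OF h(2)] Fm_hom[OF h]] GA by auto
    moreover have "Fm A (Go (Fo B)) (ccomp C (\<sigma> B) f) = Fm A B f"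
      using Fm_comp[OF h(1) h(2) GA(3)] sg h Dl[OF Fo_obj[OF h(1)] Fo_obj[OF h(2)] Fm_hom[OF h]] GA by auto
    ultimately show "ccomp C (Gm (Fo A) (Fo B) (Fm A B f)) (\<sigma> A) = ccomp C (\<sigma> B) f"
      using faithful[OF h(1) GA(3) c1 c2] by simp
  qed
  have N2: "nat_iso D D (\<lambda>A. Fo (Go A)) (\<lambda>A B f. Fm (Go A) (Go B) (Gm A B f)) (\<lambda>A. A) (\<lambda>A B f. f) (cid D)"
    unfolding nat_iso_def is_iso_def
  proof (intro conjI ballI)
    fix A assume h: "A \<in> cobj D"
    have GA: "Go A \<in> cobj C" "Fo (Go A) = A" using Go h by auto
    have ci: "cid D A \<in> chom D A A" using Did[OF GA(1)] GA by simp
    show "cid D A \<in> chom D (Fo (Go A)) A" using ci GA by simp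
    show "\<exists>g\<in>chom D A (Fo (Go A)). ccomp D g (cid D A) = cid D (Fo (Go A)) \<and> ccomp D (cid D A) g = cid D A"
      using ci GA Dl[OF h h ci] by auto
  next
    fix A B f assume h: "A \<in> cobj D" "B \<in> cobj D" "f \<in> chom D A B"
    have GA: "Go A \<in> cobj C" "Fo (Go A) = A" "Go B \<in> cobj C" "Fo (Go B) = B" using Go h by auto
    show "ccomp D f (cid D A) = ccomp D (cid D B) (Fm (Go A) (Go B) (Gm A B f))"
      using Gm[OF h] Dl[OF h] GA by simp
  qed
  show ?thesis unfolding is_equivalence_def using F GF N1 N2 by blast
qed



locale tc = fixes K :: "('o,'m,'c) twocat" assumes TC: "twocat K"
begin

lemmas ax1 = TC[unfolded twocat_def, THEN conjunct1]
lemmas ax2 = TC[unfolded twocat_def, THEN conjunct2, THEN conjunct1]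
lemmas ax3 = TC[unfolded twocat_def, THEN conjunct2, THEN conjunct2, THEN conjunct1]
lemmas ax4 = TC[unfolded twocat_def, THEN conjunct2, THEN conjunct2, THEN conjunct2, THEN conjunct1]
lemmas ax5 = TC[unfolded twocat_def, THEN conjunct2, THEN conjunct2, THEN conjunct2, THEN conjunct2, THEN conjunct1]
lemmas ax6 = TC[unfolded twocat_def, THEN conjunct2, THEN conjunct2, THEN conjunct2, THEN conjunct2, THEN conjunct2, THEN conjunct1]
lemmas ax7 = TC[unfolded twocat_def, THEN conjunct2, THEN conjunct2, THEN conjunct2, THEN conjunct2, THEN conjunct2, THEN conjunct2, THEN conjunct1]
lemmas ax8 = TC[unfolded twocat_def, THEN conjunct2, THEN conjunct2, THEN conjunct2, THEN conjunct2, THEN conjunct2, THEN conjunct2, THEN conjunct2, THEN conjunct1]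
lemmas ax9 = TC[unfolded twocat_def, THEN conjunct2, THEN conjunct2, THEN conjunct2, THEN conjunct2, THEN conjunct2, THEN conjunct2, THEN conjunct2, THEN conjunct2, THEN conjunct1]
lemmas ax10 = TC[unfolded twocat_def, THEN conjunct2, THEN conjunct2, THEN conjunct2, THEN conjunct2, THEN conjunct2, THEN conjunct2, THEN conjunct2, THEN conjunct2, THEN conjunct2, THEN conjunct1]
lemmas ax11 = TC[unfolded twocat_def, THEN conjunct2, THEN conjunct2, THEN conjunct2, THEN conjunct2, THEN conjunct2, THEN conjunct2, THEN conjunct2, THEN conjunct2, THEN conjunct2, THEN conjunct2, THEN conjunct1]
lemmas ax12 = TC[unfolded twocat_def, THEN conjunct2, THEN conjunct2, THEN conjunct2, THEN conjunct2, THEN conjunct2, THEN conjunct2, THEN conjunct2, THEN conjunct2, THEN conjunct2, THEN conjunct2, THEN conjunct2, THEN conjunct1]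
lemmas ax13 = TC[unfolded twocat_def, THEN conjunct2, THEN conjunct2, THEN conjunct2, THEN conjunct2, THEN conjunct2, THEN conjunct2, THEN conjunct2, THEN conjunct2, THEN conjunct2, THEN conjunct2, THEN conjunct2, THEN conjunct2, THEN conjunct1]
lemmas ax14 = TC[unfolded twocat_def, THEN conjunct2, THEN conjunct2, THEN conjunct2, THEN conjunct2, THEN conjunct2, THEN conjunct2, THEN conjunct2, THEN conjunct2, THEN conjunct2, THEN conjunct2, THEN conjunct2, THEN conjunct2, THEN conjunct2, THEN conjunct1]
lemmas ax15 = TC[unfolded twocat_def, THEN conjunct2, THEN conjunct2, THEN conjunct2, THEN conjunct2, THEN conjunct2, THEN conjunct2, THEN conjunct2, THEN conjunct2, THEN conjunct2, THEN conjunct2, THEN conjunct2, THEN conjunct2, THEN conjunct2, THEN conjunct2]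

abbreviation vc (infixr "\<cdot>" 55) where "a \<cdot> b \<equiv> vcomp K a b"
abbreviation hc (infixr "\<odot>" 65) where "a \<odot> b \<equiv> hcomp K a b"
abbreviation c1 (infixr "\<bullet>" 70) where "g \<bullet> f \<equiv> comp1 K g f"
abbreviation I2 ("\<one>") where "\<one> f \<equiv> id2 K f"

lemma arr_st: "f \<in> arr K \<Longrightarrow> src1 K f \<in> obj K \<and> tgt1 K f \<in> obj K"
  using ax1 by auto

lemma id1_hom: "x \<in> obj K \<Longrightarrow> id1 K x \<in> hom1 K x x"
  using ax2 by auto

lemma id1_arr[simp]: "x \<in> obj K \<Longrightarrow> id1 K x \<in> arr K"
  and src1_id1[simp]: "x \<in> obj K \<Longrightarrow> src1 K (id1 K x) = x"
  and tgt1_id1[simp]: "x \<in> obj K \<Longrightarrow> tgt1 K (id1 K x) = x"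
  using id1_hom unfolding hom1_def by auto

lemma comp1_hom: "f \<in> arr K \<Longrightarrow> g \<in> arr K \<Longrightarrow> src1 K g = tgt1 K f \<Longrightarrow> g \<bullet> f \<in> hom1 K (src1 K f) (tgt1 K g)"
  using ax3 by auto

lemma comp1_arr[simp]: "f \<in> arr K \<Longrightarrow> g \<in> arr K \<Longrightarrow> src1 K g = tgt1 K f \<Longrightarrow> g \<bullet> f \<in> arr K"
  and src1_comp1[simp]: "f \<in> arr K \<Longrightarrow> g \<in> arr K \<Longrightarrow> src1 K g = tgt1 K f \<Longrightarrow> src1 K (g \<bullet> f) = src1 K f"
  and tgt1_comp1[simp]: "f \<in> arr K \<Longrightarrow> g \<in> arr K \<Longrightarrow> src1 K g = tgt1 K f \<Longrightarrow> tgt1 K (g \<bullet> f) = tgt1 K g"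
  using comp1_hom unfolding hom1_def by auto

lemma comp1_assoc[simp]: "f \<in> arr K \<Longrightarrow> g \<in> arr K \<Longrightarrow> h \<in> arr K \<Longrightarrow> src1 K h = tgt1 K g \<Longrightarrow> src1 K g = tgt1 K f
  \<Longrightarrow> (h \<bullet> g) \<bullet> f = h \<bullet> (g \<bullet> f)"
  using ax4 by auto

lemma comp1_idl[simp]: "f \<in> arr K \<Longrightarrow> tgt1 K f = x \<Longrightarrow> id1 K x \<bullet> f = f"
  and comp1_idr[simp]: "f \<in> arr K \<Longrightarrow> src1 K f = x \<Longrightarrow> f \<bullet> id1 K x = f"
  using ax5 by auto

lemma cell_st: "a \<in> cell K \<Longrightarrow> src2 K a \<in> arr K \<and> tgt2 K a \<in> arr K \<and>
        src1 K (src2 K a) = src1 K (tgt2 K a) \<and> tgt1 K (src2 K a) = tgt1 K (tgt2 K a)"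
  using ax6 by auto

lemma id2_hom: "f \<in> arr K \<Longrightarrow> \<one> f \<in> hom2 K f f"
  using ax7 by auto

lemma id2_cell[simp]: "f \<in> arr K \<Longrightarrow> \<one> f \<in> cell K"
  and src2_id2[simp]: "f \<in> arr K \<Longrightarrow> src2 K (\<one> f) = f"
  and tgt2_id2[simp]: "f \<in> arr K \<Longrightarrow> tgt2 K (\<one> f) = f"
  using id2_hom unfolding hom2_def by auto

lemma vc_hom: "a \<in> cell K \<Longrightarrow> b \<in> cell K \<Longrightarrow> src2 K a = tgt2 K b \<Longrightarrow> a \<cdot> b \<in> hom2 K (src2 K b) (tgt2 K a)"
  using ax8 by auto

lemma vc_cell[simp]: "a \<in> cell K \<Longrightarrow> b \<in> cell K \<Longrightarrow> src2 K a = tgt2 K b \<Longrightarrow> a \<cdot> b \<in> cell K"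
  and src2_vc[simp]: "a \<in> cell K \<Longrightarrow> b \<in> cell K \<Longrightarrow> src2 K a = tgt2 K b \<Longrightarrow> src2 K (a \<cdot> b) = src2 K b"
  and tgt2_vc[simp]: "a \<in> cell K \<Longrightarrow> b \<in> cell K \<Longrightarrow> src2 K a = tgt2 K b \<Longrightarrow> tgt2 K (a \<cdot> b) = tgt2 K a"
  using vc_hom unfolding hom2_def by auto

lemma vc_assoc[simp]: "a \<in> cell K \<Longrightarrow> b \<in> cell K \<Longrightarrow> c \<in> cell K \<Longrightarrow> src2 K a = tgt2 K b \<Longrightarrow> src2 K b = tgt2 K c \<Longrightarrow>
   (a \<cdot> b) \<cdot> c = a \<cdot> (b \<cdot> c)"
  using ax9 by auto

lemma vc_idl[simp]: "a \<in> cell K \<Longrightarrow> tgt2 K a = f \<Longrightarrow> \<one> f \<cdot> a = a"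
  and vc_idr[simp]: "a \<in> cell K \<Longrightarrow> src2 K a = f \<Longrightarrow> a \<cdot> \<one> f = a"
  using ax10 by auto

lemma hc_hom: "a \<in> cell K \<Longrightarrow> b \<in> cell K \<Longrightarrow> src1 K (src2 K a) = tgt1 K (src2 K b) \<Longrightarrow>
   a \<odot> b \<in> hom2 K (src2 K a \<bullet> src2 K b) (tgt2 K a \<bullet> tgt2 K b)"
  using ax11 by auto

lemma hc_cell[simp]: "a \<in> cell K \<Longrightarrow> b \<in> cell K \<Longrightarrow> src1 K (src2 K a) = tgt1 K (src2 K b) \<Longrightarrow> a \<odot> b \<in> cell K"
  and src2_hc[simp]: "a \<in> cell K \<Longrightarrow> b \<in> cell K \<Longrightarrow> src1 K (src2 K a) = tgt1 K (src2 K b) \<Longrightarrow> src2 K (a \<odot> b) = src2 K a \<bullet> src2 K b"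
  and tgt2_hc[simp]: "a \<in> cell K \<Longrightarrow> b \<in> cell K \<Longrightarrow> src1 K (src2 K a) = tgt1 K (src2 K b) \<Longrightarrow> tgt2 K (a \<odot> b) = tgt2 K a \<bullet> tgt2 K b"
  using hc_hom unfolding hom2_def by auto

lemma src1_tgt2: "a \<in> cell K \<Longrightarrow> src1 K (tgt2 K a) = src1 K (src2 K a)"
  and tgt1_tgt2: "a \<in> cell K \<Longrightarrow> tgt1 K (tgt2 K a) = tgt1 K (src2 K a)"
  using cell_st by auto

lemma hc_assoc[simp]: "a \<in> cell K \<Longrightarrow> b \<in> cell K \<Longrightarrow> c \<in> cell K \<Longrightarrow>
        src1 K (src2 K a) = tgt1 K (src2 K b) \<Longrightarrow> src1 K (src2 K b) = tgt1 K (src2 K c) \<Longrightarrow>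
        (a \<odot> b) \<odot> c = a \<odot> (b \<odot> c)"
  using ax12 by auto

lemma hc_idl[simp]: "a \<in> cell K \<Longrightarrow> tgt1 K (src2 K a) = x \<Longrightarrow> \<one> (id1 K x) \<odot> a = a"
  and hc_idr[simp]: "a \<in> cell K \<Longrightarrow> src1 K (src2 K a) = x \<Longrightarrow> a \<odot> \<one> (id1 K x) = a"
  using ax13 by auto

lemma hc_id2[simp]: "f \<in> arr K \<Longrightarrow> g \<in> arr K \<Longrightarrow> src1 K g = tgt1 K f \<Longrightarrow> \<one> g \<odot> \<one> f = \<one> (g \<bullet> f)"
  using ax14 by auto

lemma interchange: "a \<in> cell K \<Longrightarrow> a' \<in> cell K \<Longrightarrow> b \<in> cell K \<Longrightarrow> b' \<in> cell K \<Longrightarrow>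
        src2 K a = tgt2 K a' \<Longrightarrow> src2 K b = tgt2 K b' \<Longrightarrow> src1 K (src2 K a) = tgt1 K (src2 K b) \<Longrightarrow>
        (a \<cdot> a') \<odot> (b \<cdot> b') = (a \<odot> b) \<cdot> (a' \<odot> b')"
  using ax15 by auto

lemma wl_dist[simp]: "f \<in> arr K \<Longrightarrow> a \<in> cell K \<Longrightarrow> b \<in> cell K \<Longrightarrow> src2 K a = tgt2 K b \<Longrightarrow> src1 K f = tgt1 K (src2 K b) \<Longrightarrow>
   \<one> f \<odot> (a \<cdot> b) = (\<one> f \<odot> a) \<cdot> (\<one> f \<odot> b)"
proof -
  assume h: "f \<in> arr K" "a \<in> cell K" "b \<in> cell K" "src2 K a = tgt2 K b" "src1 K f = tgt1 K (src2 K b)"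
  have "\<one> f \<odot> (a \<cdot> b) = (\<one> f \<cdot> \<one> f) \<odot> (a \<cdot> b)" using h by simp
  also have "\<dots> = (\<one> f \<odot> a) \<cdot> (\<one> f \<odot> b)" using h by (intro interchange) (auto simp: tgt1_tgt2)
  finally show ?thesis .
qed

lemma wr_dist[simp]: "f \<in> arr K \<Longrightarrow> a \<in> cell K \<Longrightarrow> b \<in> cell K \<Longrightarrow> src2 K a = tgt2 K b \<Longrightarrow> tgt1 K f = src1 K (src2 K b) \<Longrightarrow>
   (a \<cdot> b) \<odot> \<one> f = (a \<odot> \<one> f) \<cdot> (b \<odot> \<one> f)"
proof -
  assume h: "f \<in> arr K" "a \<in> cell K" "b \<in> cell K" "src2 K a = tgt2 K b" "tgt1 K f = src1 K (src2 K b)"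
  have "(a \<cdot> b) \<odot> \<one> f = (a \<cdot> b) \<odot> (\<one> f \<cdot> \<one> f)" using h by simp
  also have "\<dots> = (a \<odot> \<one> f) \<cdot> (b \<odot> \<one> f)" using h by (intro interchange) (auto simp: src1_tgt2)
  finally show ?thesis .
qed

lemma merge_l: "f \<in> arr K \<Longrightarrow> g \<in> arr K \<Longrightarrow> a \<in> cell K \<Longrightarrow> src1 K f = tgt1 K g \<Longrightarrow> src1 K g = tgt1 K (src2 K a) \<Longrightarrow>
   \<one> f \<odot> (\<one> g \<odot> a) = \<one> (f \<bullet> g) \<odot> a"
  by (subst hc_assoc[symmetric]) auto

lemma split_l[simp]: "f \<in> arr K \<Longrightarrow> g \<in> arr K \<Longrightarrow> a \<in> cell K \<Longrightarrow> src1 K g = tgt1 K f \<Longrightarrow> src1 K f = tgt1 K (src2 K a) \<Longrightarrow>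
   \<one> (g \<bullet> f) \<odot> a = \<one> g \<odot> (\<one> f \<odot> a)"
  by (rule merge_l[symmetric]) auto

lemma wl_wr: "wl K f a = \<one> f \<odot> a" "wr K a f = a \<odot> \<one> f"
  unfolding wl_def wr_def by auto

lemma xch: "a \<in> cell K \<Longrightarrow> b \<in> cell K \<Longrightarrow> src1 K (src2 K a) = tgt1 K (src2 K b) \<Longrightarrow>
  (a \<odot> \<one> (tgt2 K b)) \<cdot> (\<one> (src2 K a) \<odot> b) = (\<one> (tgt2 K a) \<odot> b) \<cdot> (a \<odot> \<one> (src2 K b))"
proof -
  assume h: "a \<in> cell K" "b \<in> cell K" "src1 K (src2 K a) = tgt1 K (src2 K b)"
  note c = cell_st[OF h(1)] cell_st[OF h(2)]
  have "(a \<odot> \<one> (tgt2 K b)) \<cdot> (\<one> (src2 K a) \<odot> b) = (a \<cdot> \<one> (src2 K a)) \<odot> (\<one> (tgt2 K b) \<cdot> b)"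
    using h c by (subst interchange) auto
  also have "\<dots> = (\<one> (tgt2 K a) \<cdot> a) \<odot> (b \<cdot> \<one> (src2 K b))" using h c by simp
  also have "\<dots> = (\<one> (tgt2 K a) \<odot> b) \<cdot> (a \<odot> \<one> (src2 K b))"
    using h c by (subst interchange) auto
  finally show ?thesis .
qed

lemma chain: "x \<cdot> y = z \<Longrightarrow> x \<in> cell K \<Longrightarrow> y \<in> cell K \<Longrightarrow> src2 K x = tgt2 K y \<Longrightarrow> r \<in> cell K \<Longrightarrow> src2 K y = tgt2 K r
  \<Longrightarrow> x \<cdot> (y \<cdot> r) = z \<cdot> r"
  by (subst vc_assoc[symmetric]) auto

lemma chain3: "x \<cdot> y \<cdot> w = z \<Longrightarrow> x \<in> cell K \<Longrightarrow> y \<in> cell K \<Longrightarrow> w \<in> cell K \<Longrightarrow> src2 K x = tgt2 K y \<Longrightarrow>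
  src2 K y = tgt2 K w \<Longrightarrow> r \<in> cell K \<Longrightarrow> src2 K w = tgt2 K r \<Longrightarrow> x \<cdot> (y \<cdot> (w \<cdot> r)) = z \<cdot> r"
proof -
  assume h: "x \<cdot> y \<cdot> w = z" "x \<in> cell K" "y \<in> cell K" "w \<in> cell K" "src2 K x = tgt2 K y"
    "src2 K y = tgt2 K w" "r \<in> cell K" "src2 K w = tgt2 K r"
  have "x \<cdot> (y \<cdot> (w \<cdot> r)) = (x \<cdot> y \<cdot> w) \<cdot> r" using h(2-) by simp
  then show ?thesis using h(1) by simp
qed

lemma whisk: "a = b \<Longrightarrow> \<one> W \<odot> (a \<odot> \<one> X) = \<one> W \<odot> (b \<odot> \<one> X)" by simp

lemma hom2D: "a \<in> hom2 K f g \<Longrightarrow> a \<in> cell K \<and> src2 K a = f \<and> tgt2 K a = g"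
  unfolding hom2_def by auto
lemma hom1D: "a \<in> hom1 K x y \<Longrightarrow> a \<in> arr K \<and> src1 K a = x \<and> tgt1 K a = y"
  unfolding hom1_def by auto
lemma hom2I: "a \<in> cell K \<Longrightarrow> src2 K a = f \<Longrightarrow> tgt2 K a = g \<Longrightarrow> a \<in> hom2 K f g"
  unfolding hom2_def by auto
lemma hom1I: "a \<in> arr K \<Longrightarrow> src1 K a = x \<Longrightarrow> tgt1 K a = y \<Longrightarrow> a \<in> hom1 K x y"
  unfolding hom1_def by auto

end

locale emo = tc K for K :: "('o,'m,'c) twocat" +
  fixes k t \<mu> \<eta> E v \<psi>
  assumes mon: "is_monad K k t \<mu> \<eta>" and em: "is_EM K k t \<mu> \<eta> E v \<psi>"
begin

lemma k_obj[simp]: "k \<in> obj K" and E_obj[simp]: "E \<in> obj K"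
  using mon em unfolding is_monad_def is_EM_def by auto

lemma t_arr[simp]: "t \<in> arr K" "src1 K t = k" "tgt1 K t = k"
  using mon unfolding is_monad_def hom1_def by auto
lemma v_arr[simp]: "v \<in> arr K" "src1 K v = E" "tgt1 K v = k"
  using em unfolding is_EM_def is_alg_def hom1_def by auto
lemma mu_cell[simp]: "\<mu> \<in> cell K" "src2 K \<mu> = t \<bullet> t" "tgt2 K \<mu> = t"
  using mon unfolding is_monad_def hom2_def by auto
lemma eta_cell[simp]: "\<eta> \<in> cell K" "src2 K \<eta> = id1 K k" "tgt2 K \<eta> = t"
  using mon unfolding is_monad_def hom2_def by auto
lemma psi_cell[simp]: "\<psi> \<in> cell K" "src2 K \<psi> = t \<bullet> v" "tgt2 K \<psi> = v"
  using em unfolding is_EM_def is_alg_def hom2_def by auto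

lemma mu_assoc: "\<mu> \<cdot> (\<one> t \<odot> \<mu>) = \<mu> \<cdot> (\<mu> \<odot> \<one> t)"
  and mu_unit1: "\<mu> \<cdot> (\<one> t \<odot> \<eta>) = \<one> t" and mu_unit2: "\<mu> \<cdot> (\<eta> \<odot> \<one> t) = \<one> t"
  using mon unfolding is_monad_def wl_wr by auto

lemma psi_assoc: "\<psi> \<cdot> (\<one> t \<odot> \<psi>) = \<psi> \<cdot> (\<mu> \<odot> \<one> v)"
  and psi_unit: "\<psi> \<cdot> (\<eta> \<odot> \<one> v) = \<one> v"
  using em unfolding is_EM_def is_alg_def wl_wr by auto

lemma univ1: "x \<in> obj K \<Longrightarrow> is_alg K k t \<mu> \<eta> x a \<alpha> \<Longrightarrow> \<exists>!g. g \<in> hom1 K x E \<and> v \<bullet> g = a \<and> \<psi> \<odot> \<one> g = \<alpha>"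
  using em unfolding is_EM_def wl_wr by blast

lemma univ2: "x \<in> obj K \<Longrightarrow> g \<in> hom1 K x E \<Longrightarrow> h \<in> hom1 K x E \<Longrightarrow> \<rho> \<in> hom2 K (v \<bullet> g) (v \<bullet> h) \<Longrightarrow>
   (\<psi> \<odot> \<one> h) \<cdot> (\<one> t \<odot> \<rho>) = \<rho> \<cdot> (\<psi> \<odot> \<one> g) \<Longrightarrow> \<exists>!\<theta>. \<theta> \<in> hom2 K g h \<and> \<one> v \<odot> \<theta> = \<rho>"
  using em unfolding is_EM_def wl_wr by blast

lemma free_alg: "is_alg K k t \<mu> \<eta> k t \<mu>"
  unfolding is_alg_def wl_wr using mu_assoc mu_unit2 by (auto intro: hom1I hom2I)

definition f where "f = (SOME g. g \<in> hom1 K k E \<and> v \<bullet> g = t \<and> \<psi> \<odot> \<one> g = \<mu>)"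

lemma f_props: "f \<in> hom1 K k E \<and> v \<bullet> f = t \<and> \<psi> \<odot> \<one> f = \<mu>"
  unfolding f_def using univ1[OF k_obj free_alg] by (rule someI_ex[OF ex1_implies_ex])

lemma f_arr[simp]: "f \<in> arr K" "src1 K f = k" "tgt1 K f = E"
  using f_props unfolding hom1_def by auto

lemma vf[simp]: "v \<bullet> f = t" using f_props by auto
lemma vfX[simp]: "X \<in> arr K \<Longrightarrow> tgt1 K X = k \<Longrightarrow> v \<bullet> (f \<bullet> X) = t \<bullet> X"
  by (subst comp1_assoc[symmetric]) auto
lemma psif[simp]: "\<psi> \<odot> \<one> f = \<mu>" using f_props by auto
lemma psifX[simp]: "X \<in> arr K \<Longrightarrow> tgt1 K X = k \<Longrightarrow> \<psi> \<odot> \<one> (f \<bullet> X) = \<mu> \<odot> \<one> X"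
proof -
  assume h: "X \<in> arr K" "tgt1 K X = k"
  have "\<psi> \<odot> \<one> (f \<bullet> X) = \<psi> \<odot> (\<one> f \<odot> \<one> X)" using h by simp
  also have "\<dots> = (\<psi> \<odot> \<one> f) \<odot> \<one> X" using h by (subst hc_assoc) auto
  finally show ?thesis by simp
qed
lemma vfa[simp]: "a \<in> cell K \<Longrightarrow> tgt1 K (src2 K a) = k \<Longrightarrow> \<one> v \<odot> (\<one> f \<odot> a) = \<one> t \<odot> a"
  by (subst merge_l) auto

lemma psi_rho: "(\<psi> \<odot> \<one> (id1 K E)) \<cdot> (\<one> t \<odot> \<psi>) = \<psi> \<cdot> (\<psi> \<odot> \<one> (f \<bullet> v))"
  using psi_assoc by simp

definition eps where "eps = (SOME \<theta>. \<theta> \<in> hom2 K (f \<bullet> v) (id1 K E) \<and> \<one> v \<odot> \<theta> = \<psi>)"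

lemma eps_props: "eps \<in> hom2 K (f \<bullet> v) (id1 K E) \<and> \<one> v \<odot> eps = \<psi>"
proof -
  have "\<exists>!\<theta>. \<theta> \<in> hom2 K (f \<bullet> v) (id1 K E) \<and> \<one> v \<odot> \<theta> = \<psi>"
    by (rule univ2) (auto intro: hom1I hom2I simp: psi_assoc)
  then show ?thesis unfolding eps_def by (rule someI_ex[OF ex1_implies_ex])
qed

lemma eps_cell[simp]: "eps \<in> cell K" "src2 K eps = f \<bullet> v" "tgt2 K eps = id1 K E"
  using eps_props unfolding hom2_def by auto

lemma veps[simp]: "\<one> v \<odot> eps = \<psi>" using eps_props by auto
lemma vepsX[simp]: "X \<in> arr K \<Longrightarrow> tgt1 K X = E \<Longrightarrow> \<one> v \<odot> (eps \<odot> \<one> X) = \<psi> \<odot> \<one> X"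
  by (subst hc_assoc[symmetric]) auto


lemma untransp: "Y \<in> arr K \<Longrightarrow> tgt1 K Y = x \<Longrightarrow> src1 K Y = k \<Longrightarrow> \<beta> \<in> hom2 K (Y \<bullet> v) Z \<Longrightarrow>
  \<beta> = (\<one> Z \<odot> eps) \<cdot> (\<beta> \<odot> \<one> (f \<bullet> v)) \<cdot> (\<one> Y \<odot> (\<eta> \<odot> \<one> v))"
proof -
  assume h: "Y \<in> arr K" "tgt1 K Y = x" "src1 K Y = k" "\<beta> \<in> hom2 K (Y \<bullet> v) Z"
  note hb = hom2D[OF h(4)]
  have z: "Z \<in> arr K" "src1 K Z = E" "tgt1 K Z = x" using cell_st[of \<beta>] hb h by auto
  have e1: "(\<one> Z \<odot> eps) \<cdot> (\<beta> \<odot> \<one> (f \<bullet> v)) = \<beta> \<cdot> (\<one> Y \<odot> \<psi>)"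
    using xch[of \<beta> eps] hb h z by simp
  have e2: "(\<one> Y \<odot> \<psi>) \<cdot> (\<one> Y \<odot> (\<eta> \<odot> \<one> v)) = \<one> (Y \<bullet> v)"
    using whisk[OF psi_unit, of Y "id1 K E"] h by simp
  have "(\<one> Z \<odot> eps) \<cdot> (\<beta> \<odot> \<one> (f \<bullet> v)) \<cdot> (\<one> Y \<odot> (\<eta> \<odot> \<one> v)) = \<beta> \<cdot> (\<one> Y \<odot> \<psi>) \<cdot> (\<one> Y \<odot> (\<eta> \<odot> \<one> v))"
    using hb h z by (subst vc_assoc[symmetric]) (auto simp: e1)
  also have "\<dots> = \<beta>" using hb h z by (simp add: e2)
  finally show ?thesis by simp
qed

lemma transp_cancel: "Y \<in> arr K \<Longrightarrow> tgt1 K Y = x \<Longrightarrow> src1 K Y = k \<Longrightarrow> \<beta>1 \<in> hom2 K (Y \<bullet> v) Z \<Longrightarrow>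
  \<beta>2 \<in> hom2 K (Y \<bullet> v) Z \<Longrightarrow> (\<beta>1 \<odot> \<one> f) \<cdot> (\<one> Y \<odot> \<eta>) = (\<beta>2 \<odot> \<one> f) \<cdot> (\<one> Y \<odot> \<eta>) \<Longrightarrow> \<beta>1 = \<beta>2"
proof -
  assume h: "Y \<in> arr K" "tgt1 K Y = x" "src1 K Y = k" "\<beta>1 \<in> hom2 K (Y \<bullet> v) Z" "\<beta>2 \<in> hom2 K (Y \<bullet> v) Z"
    and eq: "(\<beta>1 \<odot> \<one> f) \<cdot> (\<one> Y \<odot> \<eta>) = (\<beta>2 \<odot> \<one> f) \<cdot> (\<one> Y \<odot> \<eta>)"
  note hb = hom2D[OF h(4)] hom2D[OF h(5)]
  have z: "Z \<in> arr K" "src1 K Z = E" "tgt1 K Z = x" using cell_st[of \<beta>1] hb h by auto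
  have "((\<beta>1 \<odot> \<one> f) \<cdot> (\<one> Y \<odot> \<eta>)) \<odot> \<one> v = ((\<beta>2 \<odot> \<one> f) \<cdot> (\<one> Y \<odot> \<eta>)) \<odot> \<one> v"
    using eq by simp
  then have eqv: "(\<beta>1 \<odot> \<one> (f \<bullet> v)) \<cdot> (\<one> Y \<odot> (\<eta> \<odot> \<one> v)) = (\<beta>2 \<odot> \<one> (f \<bullet> v)) \<cdot> (\<one> Y \<odot> (\<eta> \<odot> \<one> v))"
    using hb h z by simp
  have "\<beta>1 = (\<one> Z \<odot> eps) \<cdot> (\<beta>1 \<odot> \<one> (f \<bullet> v)) \<cdot> (\<one> Y \<odot> (\<eta> \<odot> \<one> v))"
    by (rule untransp[OF h(1-4)])
  also have "\<dots> = (\<one> Z \<odot> eps) \<cdot> (\<beta>2 \<odot> \<one> (f \<bullet> v)) \<cdot> (\<one> Y \<odot> (\<eta> \<odot> \<one> v))"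
    using eqv by simp
  also have "\<dots> = \<beta>2" by (rule untransp[OF h(1-3) h(5), symmetric])
  finally show ?thesis .
qed


lemma psi_nat: "\<theta> \<in> hom2 K g h \<Longrightarrow> g \<in> hom1 K x E \<Longrightarrow> h \<in> hom1 K x E \<Longrightarrow>
  (\<psi> \<odot> \<one> h) \<cdot> (\<one> t \<odot> (\<one> v \<odot> \<theta>)) = (\<one> v \<odot> \<theta>) \<cdot> (\<psi> \<odot> \<one> g)"
proof -
  assume h: "\<theta> \<in> hom2 K g h" "g \<in> hom1 K x E" "h \<in> hom1 K x E"
  note hh = hom2D[OF h(1)] hom1D[OF h(2)] hom1D[OF h(3)]
  have "(eps \<odot> \<one> h) \<cdot> (\<one> (f \<bullet> v) \<odot> \<theta>) = (\<one> (id1 K E) \<odot> \<theta>) \<cdot> (eps \<odot> \<one> g)"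
    using xch[of eps \<theta>] hh by simp
  then have "\<one> v \<odot> (((eps \<odot> \<one> h) \<cdot> (\<one> (f \<bullet> v) \<odot> \<theta>)) \<odot> \<one> (id1 K x)) =
     \<one> v \<odot> (((\<one> (id1 K E) \<odot> \<theta>) \<cdot> (eps \<odot> \<one> g)) \<odot> \<one> (id1 K x))" by (rule whisk)
  then show ?thesis using hh by simp
qed

lemma ex1_uniq: "\<exists>!x. P x \<Longrightarrow> P a \<Longrightarrow> P b \<Longrightarrow> a = b" by blast

lemma v_faithful: "\<theta>1 \<in> hom2 K g h \<Longrightarrow> \<theta>2 \<in> hom2 K g h \<Longrightarrow> g \<in> hom1 K x E \<Longrightarrow> h \<in> hom1 K x E \<Longrightarrow>
  \<one> v \<odot> \<theta>1 = \<one> v \<odot> \<theta>2 \<Longrightarrow> \<theta>1 = \<theta>2"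
proof -
  assume h: "\<theta>1 \<in> hom2 K g h" "\<theta>2 \<in> hom2 K g h" "g \<in> hom1 K x E" "h \<in> hom1 K x E" "\<one> v \<odot> \<theta>1 = \<one> v \<odot> \<theta>2"
  note hh = hom2D[OF h(1)] hom2D[OF h(2)] hom1D[OF h(3)] hom1D[OF h(4)]
  have x: "x \<in> obj K" using hh arr_st by auto
  have "\<exists>!\<theta>. \<theta> \<in> hom2 K g h \<and> \<one> v \<odot> \<theta> = \<one> v \<odot> \<theta>1"
  proof (rule univ2[OF x h(3) h(4)])
    show "\<one> v \<odot> \<theta>1 \<in> hom2 K (v \<bullet> g) (v \<bullet> h)" using hh by (intro hom2I) simp_all
    show "(\<psi> \<odot> \<one> h) \<cdot> (\<one> t \<odot> (\<one> v \<odot> \<theta>1)) = (\<one> v \<odot> \<theta>1) \<cdot> (\<psi> \<odot> \<one> g)"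
      using psi_nat[OF h(1) h(3) h(4)] .
  qed
  moreover have "\<theta>1 \<in> hom2 K g h \<and> \<one> v \<odot> \<theta>1 = \<one> v \<odot> \<theta>1" using h(1) by simp
  moreover have "\<theta>2 \<in> hom2 K g h \<and> \<one> v \<odot> \<theta>2 = \<one> v \<odot> \<theta>1" using h(2,5) by simp
  ultimately show ?thesis by (rule ex1_uniq)
qed

lemma v_full: "g \<in> hom1 K x E \<Longrightarrow> h \<in> hom1 K x E \<Longrightarrow> \<rho> \<in> hom2 K (v \<bullet> g) (v \<bullet> h) \<Longrightarrow>
   (\<psi> \<odot> \<one> h) \<cdot> (\<one> t \<odot> \<rho>) = \<rho> \<cdot> (\<psi> \<odot> \<one> g) \<Longrightarrow> \<exists>\<theta>. \<theta> \<in> hom2 K g h \<and> \<one> v \<odot> \<theta> = \<rho>"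
proof -
  assume h: "g \<in> hom1 K x E" "h \<in> hom1 K x E"
  then have x: "x \<in> obj K" using hom1D arr_st by blast
  assume "\<rho> \<in> hom2 K (v \<bullet> g) (v \<bullet> h)" "(\<psi> \<odot> \<one> h) \<cdot> (\<one> t \<odot> \<rho>) = \<rho> \<cdot> (\<psi> \<odot> \<one> g)"
  from ex1_implies_ex[OF univ2[OF x h this]] show ?thesis .
qed

end


locale main = tc K + A: emo K k t \<mu> \<eta> E v \<psi> + B: emo K k' t' \<mu>' \<eta>' E' v' \<psi>'
  for K :: "('o,'m,'c) twocat" and k t \<mu> \<eta> E v \<psi> k' t' \<mu>' \<eta>' E' v' \<psi>'
begin
end

locale lob = main +
  fixes V Vb \<iota> \<pi>
  assumes lo: "(V,Vb,\<iota>,\<pi>) \<in> lift_obj K k E v k' E' v'"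
begin

lemma V_arr[simp]: "V \<in> arr K" "src1 K V = k" "tgt1 K V = k'"
  and Vb_arr[simp]: "Vb \<in> arr K" "src1 K Vb = E" "tgt1 K Vb = E'"
  and iota_cell[simp]: "\<iota> \<in> cell K" "src2 K \<iota> = v' \<bullet> Vb" "tgt2 K \<iota> = V \<bullet> v"
  and pi_cell[simp]: "\<pi> \<in> cell K" "src2 K \<pi> = V \<bullet> v" "tgt2 K \<pi> = v' \<bullet> Vb"
  using lo unfolding lift_obj_def hom1_def hom2_def by auto

lemma pi_iota: "\<pi> \<cdot> \<iota> = \<one> (v' \<bullet> Vb)"
  using lo unfolding lift_obj_def by auto

definition alpha where "alpha = \<iota> \<cdot> (\<psi>' \<odot> \<one> Vb) \<cdot> (\<one> t' \<odot> \<pi>)"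

lemma alpha_cell[simp]: "alpha \<in> cell K" "src2 K alpha = t' \<bullet> V \<bullet> v" "tgt2 K alpha = V \<bullet> v"
  unfolding alpha_def by auto

lemma alpha_assoc: "alpha \<cdot> (\<one> t' \<odot> alpha) = alpha \<cdot> (\<mu>' \<odot> \<one> (V \<bullet> v))"
proof -
  have e1: "(\<one> t' \<odot> \<pi>) \<cdot> (\<one> t' \<odot> \<iota>) = \<one> (t' \<bullet> v' \<bullet> Vb)"
    using whisk[OF pi_iota, of t' "id1 K E"] by simp
  have e2: "(\<psi>' \<odot> \<one> Vb) \<cdot> (\<one> t' \<odot> (\<psi>' \<odot> \<one> Vb)) = (\<psi>' \<odot> \<one> Vb) \<cdot> (\<mu>' \<odot> \<one> (v' \<bullet> Vb))"
    using whisk[OF B.psi_assoc, of "id1 K k'" Vb] by simp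
  have e3: "(\<mu>' \<odot> \<one> (v' \<bullet> Vb)) \<cdot> (\<one> t' \<odot> (\<one> t' \<odot> \<pi>)) = (\<one> t' \<odot> \<pi>) \<cdot> (\<mu>' \<odot> \<one> (V \<bullet> v))"
    using xch[of \<mu>' \<pi>] by simp
  show ?thesis unfolding alpha_def
    by (simp add: e1 chain[OF e1] e2 chain[OF e2] e3 chain[OF e3])
qed


definition psiF where "psiF = (alpha \<odot> \<one> A.f) \<cdot> (\<one> t' \<odot> (\<one> V \<odot> \<eta>))"

lemma psiF_cell[simp]: "psiF \<in> cell K" "src2 K psiF = t' \<bullet> V" "tgt2 K psiF = V \<bullet> t"
  unfolding psiF_def by auto

lemma key1: "(\<one> V \<odot> \<mu>) \<cdot> (psiF \<odot> \<one> t) = alpha \<odot> \<one> A.f"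
proof -
  have e1: "(\<one> V \<odot> \<mu>) \<cdot> (alpha \<odot> \<one> (A.f \<bullet> t)) = (alpha \<odot> \<one> A.f) \<cdot> (\<one> t' \<odot> (\<one> V \<odot> \<mu>))"
    using xch[of alpha "A.eps \<odot> \<one> A.f"] by simp
  have e2: "(\<one> t' \<odot> (\<one> V \<odot> \<mu>)) \<cdot> (\<one> t' \<odot> (\<one> V \<odot> (\<eta> \<odot> \<one> t))) = \<one> (t' \<bullet> V \<bullet> t)"
    using whisk[OF A.mu_unit2, of "t' \<bullet> V" "id1 K k"] by simp
  show ?thesis unfolding psiF_def by (simp add: e1 chain[OF e1] e2 chain[OF e2])
qed

lemma psiF_mnd: "(\<one> V \<odot> \<mu>) \<cdot> (psiF \<odot> \<one> t) \<cdot> (\<one> t' \<odot> psiF) = psiF \<cdot> (\<mu>' \<odot> \<one> V)"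
proof -
  have e1: "(alpha \<odot> \<one> A.f) \<cdot> (\<one> t' \<odot> (alpha \<odot> \<one> A.f)) = (alpha \<odot> \<one> A.f) \<cdot> (\<mu>' \<odot> \<one> (V \<bullet> t))"
    using whisk[OF alpha_assoc, of "id1 K k'" A.f] by simp
  have e2: "(\<mu>' \<odot> \<one> (V \<bullet> t)) \<cdot> (\<one> t' \<odot> (\<one> t' \<odot> (\<one> V \<odot> \<eta>))) = (\<one> t' \<odot> (\<one> V \<odot> \<eta>)) \<cdot> (\<mu>' \<odot> \<one> V)"
    using xch[of \<mu>' "\<one> V \<odot> \<eta>"] by simp
  have "(\<one> V \<odot> \<mu>) \<cdot> (psiF \<odot> \<one> t) \<cdot> (\<one> t' \<odot> psiF) = (alpha \<odot> \<one> A.f) \<cdot> (\<one> t' \<odot> psiF)"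
    by (subst vc_assoc[symmetric]) (auto simp: key1)
  also have "\<dots> = psiF \<cdot> (\<mu>' \<odot> \<one> V)"
    unfolding psiF_def by (simp add: e1 chain[OF e1] e2 chain[OF e2])
  finally show ?thesis .
qed


lemma pi_alpha: "\<pi> \<cdot> alpha = (\<psi>' \<odot> \<one> Vb) \<cdot> (\<one> t' \<odot> \<pi>)"
  unfolding alpha_def using pi_iota chain[OF pi_iota] by simp

lemma L_a: "alpha \<cdot> (\<eta>' \<odot> \<one> (V \<bullet> v)) = \<iota> \<cdot> \<pi>"
proof -
  have e1: "(\<one> t' \<odot> \<pi>) \<cdot> (\<eta>' \<odot> \<one> (V \<bullet> v)) = (\<eta>' \<odot> \<one> (v' \<bullet> Vb)) \<cdot> \<pi>"
    using xch[of \<eta>' \<pi>] by simp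
  have e2: "(\<psi>' \<odot> \<one> Vb) \<cdot> (\<eta>' \<odot> \<one> (v' \<bullet> Vb)) = \<one> (v' \<bullet> Vb)"
    using whisk[OF B.psi_unit, of "id1 K k'" Vb] by simp
  show ?thesis unfolding alpha_def by (simp add: e1 chain[OF e1] e2 chain[OF e2])
qed

lemma L_b: "psiF \<cdot> (\<eta>' \<odot> \<one> V) = (\<iota> \<odot> \<one> A.f) \<cdot> (\<pi> \<odot> \<one> A.f) \<cdot> (\<one> V \<odot> \<eta>)"
proof -
  have e1: "(\<one> t' \<odot> (\<one> V \<odot> \<eta>)) \<cdot> (\<eta>' \<odot> \<one> V) = (\<eta>' \<odot> \<one> (V \<bullet> t)) \<cdot> (\<one> V \<odot> \<eta>)"
    using xch[of \<eta>' "\<one> V \<odot> \<eta>"] by simp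
  have e2: "(alpha \<odot> \<one> A.f) \<cdot> (\<eta>' \<odot> \<one> (V \<bullet> t)) = (\<iota> \<odot> \<one> A.f) \<cdot> (\<pi> \<odot> \<one> A.f)"
    using whisk[OF L_a, of "id1 K k'" A.f] by simp
  show ?thesis unfolding psiF_def by (simp add: e1 chain[OF e1] e2 chain[OF e2])
qed

end

locale lob2 = main +
  fixes V Vb \<iota>1 \<pi>1 W Wb \<iota>2 \<pi>2
  assumes lo1: "(V,Vb,\<iota>1,\<pi>1) \<in> lift_obj K k E v k' E' v'"
    and lo2: "(W,Wb,\<iota>2,\<pi>2) \<in> lift_obj K k E v k' E' v'"

sublocale lob2 \<subseteq> P: lob K k t \<mu> \<eta> E v \<psi> k' t' \<mu>' \<eta>' E' v' \<psi>' V Vb \<iota>1 \<pi>1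
  by unfold_locales (rule lo1)
sublocale lob2 \<subseteq> Q: lob K k t \<mu> \<eta> E v \<psi> k' t' \<mu>' \<eta>' E' v' \<psi>' W Wb \<iota>2 \<pi>2
  by unfold_locales (rule lo2)

context lob2
begin

lemma MndI_lhs: "\<omega> \<in> hom2 K V W \<Longrightarrow>
  (\<omega> \<odot> \<one> t) \<cdot> P.psiF = (((\<omega> \<odot> \<one> v) \<cdot> P.alpha) \<odot> \<one> A.f) \<cdot> (\<one> t' \<odot> (\<one> V \<odot> \<eta>))"
  unfolding P.psiF_def by (drule hom2D) simp

lemma MndI_rhs: "\<omega> \<in> hom2 K V W \<Longrightarrow>
  (\<one> W \<odot> \<mu>) \<cdot> (Q.psiF \<odot> \<one> t) \<cdot> (\<one> t' \<odot> (\<omega> \<odot> \<one> t)) \<cdot> (\<one> t' \<odot> P.psiF) \<cdot> (\<one> t' \<odot> (\<eta>' \<odot> \<one> V))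
  = ((Q.alpha \<cdot> (\<one> t' \<odot> ((\<omega> \<odot> \<one> v) \<cdot> \<iota>1 \<cdot> \<pi>1))) \<odot> \<one> A.f) \<cdot> (\<one> t' \<odot> (\<one> V \<odot> \<eta>))"
proof -
  assume h: "\<omega> \<in> hom2 K V W"
  note hh = hom2D[OF h]
  have e1: "(\<one> t' \<odot> P.psiF) \<cdot> (\<one> t' \<odot> (\<eta>' \<odot> \<one> V)) = 
     (\<one> t' \<odot> (\<iota>1 \<odot> \<one> A.f)) \<cdot> (\<one> t' \<odot> (\<pi>1 \<odot> \<one> A.f)) \<cdot> (\<one> t' \<odot> (\<one> V \<odot> \<eta>))"
    using whisk[OF P.L_b, of t' "id1 K k"] by simp
  show ?thesis using hh Q.key1 chain[OF Q.key1] by (simp add: e1 chain[OF e1])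
qed

lemma MndP_lhs: "\<omega> \<in> hom2 K V W \<Longrightarrow>
  Q.psiF \<cdot> (\<one> t' \<odot> \<omega>) = ((Q.alpha \<cdot> (\<one> t' \<odot> (\<omega> \<odot> \<one> v))) \<odot> \<one> A.f) \<cdot> (\<one> t' \<odot> (\<one> V \<odot> \<eta>))"
proof -
  assume h: "\<omega> \<in> hom2 K V W"
  note hh = hom2D[OF h]
  have e1: "(\<one> t' \<odot> (\<one> W \<odot> \<eta>)) \<cdot> (\<one> t' \<odot> \<omega>) = (\<one> t' \<odot> (\<omega> \<odot> \<one> t)) \<cdot> (\<one> t' \<odot> (\<one> V \<odot> \<eta>))"
    using xch[of "\<one> t' \<odot> \<omega>" \<eta>] hh by simp
  show ?thesis unfolding Q.psiF_def using hh by (simp add: e1 chain[OF e1])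
qed

lemma MndP_rhs: "\<omega> \<in> hom2 K V W \<Longrightarrow>
  (\<one> W \<odot> \<mu>) \<cdot> (Q.psiF \<odot> \<one> t) \<cdot> (\<eta>' \<odot> \<one> (W \<bullet> t)) \<cdot> (\<omega> \<odot> \<one> t) \<cdot> P.psiF
  = ((Q.alpha \<cdot> (\<eta>' \<odot> \<one> (W \<bullet> v)) \<cdot> (\<omega> \<odot> \<one> v) \<cdot> P.alpha) \<odot> \<one> A.f) \<cdot> (\<one> t' \<odot> (\<one> V \<odot> \<eta>))"
  unfolding P.psiF_def by (drule hom2D) (simp add: Q.key1 chain[OF Q.key1])

end
context lob2
begin

lemma L_c: "\<omega> \<in> hom2 K V W \<Longrightarrow> \<omega>b \<in> hom2 K Vb Wb \<Longrightarrow> \<iota>2 \<cdot> (\<one> v' \<odot> \<omega>b) = (\<omega> \<odot> \<one> v) \<cdot> \<iota>1 \<Longrightarrow>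
  (\<omega> \<odot> \<one> v) \<cdot> P.alpha = Q.alpha \<cdot> (\<one> t' \<odot> ((\<omega> \<odot> \<one> v) \<cdot> \<iota>1 \<cdot> \<pi>1))"
proof -
  assume h: "\<omega> \<in> hom2 K V W" "\<omega>b \<in> hom2 K Vb Wb" and c: "\<iota>2 \<cdot> (\<one> v' \<odot> \<omega>b) = (\<omega> \<odot> \<one> v) \<cdot> \<iota>1"
  note hh = hom2D[OF h(1)] hom2D[OF h(2)]
  have c1: "(\<one> t' \<odot> (\<omega> \<odot> \<one> v)) \<cdot> (\<one> t' \<odot> \<iota>1) = (\<one> t' \<odot> \<iota>2) \<cdot> (\<one> t' \<odot> (\<one> v' \<odot> \<omega>b))"
    using whisk[OF c[symmetric], of t' "id1 K E"] hh by simp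
  have c2: "(\<one> t' \<odot> \<pi>2) \<cdot> (\<one> t' \<odot> \<iota>2) = \<one> (t' \<bullet> v' \<bullet> Wb)"
    using whisk[OF Q.pi_iota, of t' "id1 K E"] by simp
  have c3: "(\<psi>' \<odot> \<one> Wb) \<cdot> (\<one> t' \<odot> (\<one> v' \<odot> \<omega>b)) = (\<one> v' \<odot> \<omega>b) \<cdot> (\<psi>' \<odot> \<one> Vb)"
    using B.psi_nat[OF h(2), of E] by (simp add: hom1I)
  show ?thesis unfolding P.alpha_def Q.alpha_def using hh
    by (simp add: c c1 chain[OF c1] c2 chain[OF c2] c3 chain[OF c3] chain[OF c])
qed

lemma L_d: "\<omega> \<in> hom2 K V W \<Longrightarrow> \<omega>b \<in> hom2 K Vb Wb \<Longrightarrow> (\<one> v' \<odot> \<omega>b) \<cdot> \<pi>1 = \<pi>2 \<cdot> (\<omega> \<odot> \<one> v) \<Longrightarrow>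
  Q.alpha \<cdot> (\<one> t' \<odot> (\<omega> \<odot> \<one> v)) = Q.alpha \<cdot> (\<eta>' \<odot> \<one> (W \<bullet> v)) \<cdot> (\<omega> \<odot> \<one> v) \<cdot> P.alpha"
proof -
  assume h: "\<omega> \<in> hom2 K V W" "\<omega>b \<in> hom2 K Vb Wb" and c: "(\<one> v' \<odot> \<omega>b) \<cdot> \<pi>1 = \<pi>2 \<cdot> (\<omega> \<odot> \<one> v)"
  note hh = hom2D[OF h(1)] hom2D[OF h(2)]
  have c1: "(\<one> t' \<odot> \<pi>2) \<cdot> (\<one> t' \<odot> (\<omega> \<odot> \<one> v)) = (\<one> t' \<odot> (\<one> v' \<odot> \<omega>b)) \<cdot> (\<one> t' \<odot> \<pi>1)"
    using whisk[OF c[symmetric], of t' "id1 K E"] hh by simp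
  have c3: "(\<psi>' \<odot> \<one> Wb) \<cdot> (\<one> t' \<odot> (\<one> v' \<odot> \<omega>b)) = (\<one> v' \<odot> \<omega>b) \<cdot> (\<psi>' \<odot> \<one> Vb)"
    using B.psi_nat[OF h(2), of E] by (simp add: hom1I)
  have l: "Q.alpha \<cdot> (\<one> t' \<odot> (\<omega> \<odot> \<one> v)) = \<iota>2 \<cdot> (\<one> v' \<odot> \<omega>b) \<cdot> (\<psi>' \<odot> \<one> Vb) \<cdot> (\<one> t' \<odot> \<pi>1)"
    unfolding Q.alpha_def using hh by (simp add: c1 chain[OF c1] c3 chain[OF c3])
  have r: "Q.alpha \<cdot> (\<eta>' \<odot> \<one> (W \<bullet> v)) \<cdot> (\<omega> \<odot> \<one> v) \<cdot> P.alpha = \<iota>2 \<cdot> (\<one> v' \<odot> \<omega>b) \<cdot> (\<psi>' \<odot> \<one> Vb) \<cdot> (\<one> t' \<odot> \<pi>1)"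
    using hh by (simp add: Q.L_a chain[OF Q.L_a] c[symmetric] chain[OF c[symmetric]] P.pi_alpha chain[OF P.pi_alpha])
  show ?thesis using l r by simp
qed

lemma FI_mor: "\<omega> \<in> hom2 K V W \<Longrightarrow> \<omega>b \<in> hom2 K Vb Wb \<Longrightarrow> \<iota>2 \<cdot> (\<one> v' \<odot> \<omega>b) = (\<omega> \<odot> \<one> v) \<cdot> \<iota>1 \<Longrightarrow>
  (\<omega> \<odot> \<one> t) \<cdot> P.psiF = (\<one> W \<odot> \<mu>) \<cdot> (Q.psiF \<odot> \<one> t) \<cdot> (\<one> t' \<odot> (\<omega> \<odot> \<one> t)) \<cdot> (\<one> t' \<odot> P.psiF) \<cdot> (\<one> t' \<odot> (\<eta>' \<odot> \<one> V))"
  by (simp only: MndI_lhs MndI_rhs L_c)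

lemma FP_mor: "\<omega> \<in> hom2 K V W \<Longrightarrow> \<omega>b \<in> hom2 K Vb Wb \<Longrightarrow> (\<one> v' \<odot> \<omega>b) \<cdot> \<pi>1 = \<pi>2 \<cdot> (\<omega> \<odot> \<one> v) \<Longrightarrow>
  Q.psiF \<cdot> (\<one> t' \<odot> \<omega>) = (\<one> W \<odot> \<mu>) \<cdot> (Q.psiF \<odot> \<one> t) \<cdot> (\<eta>' \<odot> \<one> (W \<bullet> t)) \<cdot> (\<omega> \<odot> \<one> t) \<cdot> P.psiF"
  by (simp only: MndP_lhs MndP_rhs L_d)

end

context lob2
begin

lemma hom_tV: "\<beta> \<in> cell K \<Longrightarrow> src2 K \<beta> = t' \<bullet> V \<bullet> v \<Longrightarrow> tgt2 K \<beta> = Z \<Longrightarrow> \<beta> \<in> hom2 K ((t' \<bullet> V) \<bullet> v) Z"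
  by (intro hom2I) auto

lemma ffI_ex: "\<omega> \<in> hom2 K V W \<Longrightarrow>
  (\<omega> \<odot> \<one> t) \<cdot> P.psiF = (\<one> W \<odot> \<mu>) \<cdot> (Q.psiF \<odot> \<one> t) \<cdot> (\<one> t' \<odot> (\<omega> \<odot> \<one> t)) \<cdot> (\<one> t' \<odot> P.psiF) \<cdot> (\<one> t' \<odot> (\<eta>' \<odot> \<one> V)) \<Longrightarrow>
  \<exists>\<omega>b. \<omega>b \<in> hom2 K Vb Wb \<and> \<iota>2 \<cdot> (\<one> v' \<odot> \<omega>b) = (\<omega> \<odot> \<one> v) \<cdot> \<iota>1"
proof -
  assume h: "\<omega> \<in> hom2 K V W" and c: "(\<omega> \<odot> \<one> t) \<cdot> P.psiF = (\<one> W \<odot> \<mu>) \<cdot> (Q.psiF \<odot> \<one> t) \<cdot> (\<one> t' \<odot> (\<omega> \<odot> \<one> t)) \<cdot> (\<one> t' \<odot> P.psiF) \<cdot> (\<one> t' \<odot> (\<eta>' \<odot> \<one> V))"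
  note hh = hom2D[OF h]
  have s1: "(\<omega> \<odot> \<one> v) \<cdot> P.alpha = Q.alpha \<cdot> (\<one> t' \<odot> ((\<omega> \<odot> \<one> v) \<cdot> \<iota>1 \<cdot> \<pi>1))"
    apply (rule A.transp_cancel[of "t' \<bullet> V" k' _ "W \<bullet> v"])
    using hh apply simp_all
    subgoal by (intro hom2I) (use hh in simp_all)
    subgoal by (intro hom2I) (use hh in simp_all)
    using c MndI_lhs[OF h] MndI_rhs[OF h] by simp
  define \<rho> where "\<rho> = \<pi>2 \<cdot> (\<omega> \<odot> \<one> v) \<cdot> \<iota>1"
  have e1: "(\<one> t' \<odot> \<pi>1) \<cdot> (\<one> t' \<odot> \<iota>1) = \<one> (t' \<bullet> v' \<bullet> Vb)"
    using whisk[OF P.pi_iota, of t' "id1 K E"] by simp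
  from s1 have "((\<omega> \<odot> \<one> v) \<cdot> P.alpha) \<cdot> (\<one> t' \<odot> \<iota>1) = (Q.alpha \<cdot> (\<one> t' \<odot> ((\<omega> \<odot> \<one> v) \<cdot> \<iota>1 \<cdot> \<pi>1))) \<cdot> (\<one> t' \<odot> \<iota>1)"
    by simp
  then have s2: "(\<omega> \<odot> \<one> v) \<cdot> \<iota>1 \<cdot> (\<psi>' \<odot> \<one> Vb) = \<iota>2 \<cdot> (\<psi>' \<odot> \<one> Wb) \<cdot> (\<one> t' \<odot> \<pi>2) \<cdot> (\<one> t' \<odot> (\<omega> \<odot> \<one> v)) \<cdot> (\<one> t' \<odot> \<iota>1)"
    unfolding P.alpha_def Q.alpha_def using hh by (simp add: e1 chain[OF e1])
  from s2 have "\<pi>2 \<cdot> ((\<omega> \<odot> \<one> v) \<cdot> \<iota>1 \<cdot> (\<psi>' \<odot> \<one> Vb)) = \<pi>2 \<cdot> (\<iota>2 \<cdot> (\<psi>' \<odot> \<one> Wb) \<cdot> (\<one> t' \<odot> \<pi>2) \<cdot> (\<one> t' \<odot> (\<omega> \<odot> \<one> v)) \<cdot> (\<one> t' \<odot> \<iota>1))"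
    by simp
  then have s3: "(\<psi>' \<odot> \<one> Wb) \<cdot> (\<one> t' \<odot> \<rho>) = \<rho> \<cdot> (\<psi>' \<odot> \<one> Vb)"
    unfolding \<rho>_def using hh by (simp add: Q.pi_iota chain[OF Q.pi_iota])
  have x1: "(\<one> t' \<odot> \<iota>1) \<cdot> (\<eta>' \<odot> \<one> (v' \<bullet> Vb)) = (\<eta>' \<odot> \<one> (V \<bullet> v)) \<cdot> \<iota>1"
    using xch[of \<eta>' \<iota>1] by simp
  have x2: "(\<one> t' \<odot> (\<omega> \<odot> \<one> v)) \<cdot> (\<eta>' \<odot> \<one> (V \<bullet> v)) = (\<eta>' \<odot> \<one> (W \<bullet> v)) \<cdot> (\<omega> \<odot> \<one> v)"
    using xch[of \<eta>' "\<omega> \<odot> \<one> v"] hh by simp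
  have x3: "(\<one> t' \<odot> \<pi>2) \<cdot> (\<eta>' \<odot> \<one> (W \<bullet> v)) = (\<eta>' \<odot> \<one> (v' \<bullet> Wb)) \<cdot> \<pi>2"
    using xch[of \<eta>' \<pi>2] by simp
  have u1: "(\<psi>' \<odot> \<one> Vb) \<cdot> (\<eta>' \<odot> \<one> (v' \<bullet> Vb)) = \<one> (v' \<bullet> Vb)"
    using whisk[OF B.psi_unit, of "id1 K k'" Vb] by simp
  have u2: "(\<psi>' \<odot> \<one> Wb) \<cdot> (\<eta>' \<odot> \<one> (v' \<bullet> Wb)) = \<one> (v' \<bullet> Wb)"
    using whisk[OF B.psi_unit, of "id1 K k'" Wb] by simp
  from s2 have "((\<omega> \<odot> \<one> v) \<cdot> \<iota>1 \<cdot> (\<psi>' \<odot> \<one> Vb)) \<cdot> (\<eta>' \<odot> \<one> (v' \<bullet> Vb)) = (\<iota>2 \<cdot> (\<psi>' \<odot> \<one> Wb) \<cdot> (\<one> t' \<odot> \<pi>2) \<cdot> (\<one> t' \<odot> (\<omega> \<odot> \<one> v)) \<cdot> (\<one> t' \<odot> \<iota>1)) \<cdot> (\<eta>' \<odot> \<one> (v' \<bullet> Vb))"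
    by simp
  then have s4: "(\<omega> \<odot> \<one> v) \<cdot> \<iota>1 = \<iota>2 \<cdot> \<rho>"
    unfolding \<rho>_def using hh by (simp add: x1 chain[OF x1] x2 chain[OF x2] x3 chain[OF x3] u1 chain[OF u1] u2 chain[OF u2])
  have rh: "\<rho> \<in> hom2 K (v' \<bullet> Vb) (v' \<bullet> Wb)" unfolding \<rho>_def using hh by (intro hom2I) auto
  have "Vb \<in> hom1 K E E'" "Wb \<in> hom1 K E E'" by (auto intro!: hom1I)
  from B.v_full[OF this rh s3] obtain \<omega>b where "\<omega>b \<in> hom2 K Vb Wb" "\<one> v' \<odot> \<omega>b = \<rho>" by blast
  then show ?thesis using s4 by auto
qed

lemma ffI_uniq: "\<omega>b1 \<in> hom2 K Vb Wb \<Longrightarrow> \<omega>b2 \<in> hom2 K Vb Wb \<Longrightarrow> \<iota>2 \<cdot> (\<one> v' \<odot> \<omega>b1) = (\<omega> \<odot> \<one> v) \<cdot> \<iota>1 \<Longrightarrow>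
   \<iota>2 \<cdot> (\<one> v' \<odot> \<omega>b2) = (\<omega> \<odot> \<one> v) \<cdot> \<iota>1 \<Longrightarrow> \<omega>b1 = \<omega>b2"
proof -
  assume h: "\<omega>b1 \<in> hom2 K Vb Wb" "\<omega>b2 \<in> hom2 K Vb Wb" and c: "\<iota>2 \<cdot> (\<one> v' \<odot> \<omega>b1) = (\<omega> \<odot> \<one> v) \<cdot> \<iota>1"
     "\<iota>2 \<cdot> (\<one> v' \<odot> \<omega>b2) = (\<omega> \<odot> \<one> v) \<cdot> \<iota>1"
  note hh = hom2D[OF h(1)] hom2D[OF h(2)]
  have "\<one> v' \<odot> \<omega>b1 = \<pi>2 \<cdot> \<iota>2 \<cdot> (\<one> v' \<odot> \<omega>b1)" using hh by (simp add: Q.pi_iota chain[OF Q.pi_iota])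
  also have "\<dots> = \<pi>2 \<cdot> \<iota>2 \<cdot> (\<one> v' \<odot> \<omega>b2)" using c by simp
  also have "\<dots> = \<one> v' \<odot> \<omega>b2" using hh by (simp add: Q.pi_iota chain[OF Q.pi_iota])
  finally have "\<one> v' \<odot> \<omega>b1 = \<one> v' \<odot> \<omega>b2" .
  then show ?thesis by (rule B.v_faithful[OF h(1) h(2), rotated 2]) (auto intro: hom1I)
qed

end

context lob2
begin

lemma ffP_ex: "\<omega> \<in> hom2 K V W \<Longrightarrow>
  Q.psiF \<cdot> (\<one> t' \<odot> \<omega>) = (\<one> W \<odot> \<mu>) \<cdot> (Q.psiF \<odot> \<one> t) \<cdot> (\<eta>' \<odot> \<one> (W \<bullet> t)) \<cdot> (\<omega> \<odot> \<one> t) \<cdot> P.psiF \<Longrightarrow>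
  \<exists>\<omega>b. \<omega>b \<in> hom2 K Vb Wb \<and> (\<one> v' \<odot> \<omega>b) \<cdot> \<pi>1 = \<pi>2 \<cdot> (\<omega> \<odot> \<one> v)"
proof -
  assume h: "\<omega> \<in> hom2 K V W" and c: "Q.psiF \<cdot> (\<one> t' \<odot> \<omega>) = (\<one> W \<odot> \<mu>) \<cdot> (Q.psiF \<odot> \<one> t) \<cdot> (\<eta>' \<odot> \<one> (W \<bullet> t)) \<cdot> (\<omega> \<odot> \<one> t) \<cdot> P.psiF"
  note hh = hom2D[OF h]
  have s1: "Q.alpha \<cdot> (\<one> t' \<odot> (\<omega> \<odot> \<one> v)) = Q.alpha \<cdot> (\<eta>' \<odot> \<one> (W \<bullet> v)) \<cdot> (\<omega> \<odot> \<one> v) \<cdot> P.alpha"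
    apply (rule A.transp_cancel[of "t' \<bullet> V" k' _ "W \<bullet> v"])
    using hh apply simp_all
    subgoal by (intro hom2I) (use hh in simp_all)
    subgoal by (intro hom2I) (use hh in simp_all)
    using c MndP_lhs[OF h] MndP_rhs[OF h] by simp
  define \<rho> where "\<rho> = \<pi>2 \<cdot> (\<omega> \<odot> \<one> v) \<cdot> \<iota>1"
  from s1 have "\<pi>2 \<cdot> (Q.alpha \<cdot> (\<one> t' \<odot> (\<omega> \<odot> \<one> v))) = \<pi>2 \<cdot> (Q.alpha \<cdot> (\<eta>' \<odot> \<one> (W \<bullet> v)) \<cdot> (\<omega> \<odot> \<one> v) \<cdot> P.alpha)"
    by simp
  then have s2: "(\<psi>' \<odot> \<one> Wb) \<cdot> (\<one> t' \<odot> \<pi>2) \<cdot> (\<one> t' \<odot> (\<omega> \<odot> \<one> v)) = \<pi>2 \<cdot> (\<omega> \<odot> \<one> v) \<cdot> \<iota>1 \<cdot> (\<psi>' \<odot> \<one> Vb) \<cdot> (\<one> t' \<odot> \<pi>1)"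
    using hh by (simp add: Q.pi_alpha chain[OF Q.pi_alpha] Q.L_a chain[OF Q.L_a] Q.pi_iota chain[OF Q.pi_iota] P.alpha_def)
  have e1: "(\<one> t' \<odot> \<pi>1) \<cdot> (\<one> t' \<odot> \<iota>1) = \<one> (t' \<bullet> v' \<bullet> Vb)"
    using whisk[OF P.pi_iota, of t' "id1 K E"] by simp
  from s2 have "((\<psi>' \<odot> \<one> Wb) \<cdot> (\<one> t' \<odot> \<pi>2) \<cdot> (\<one> t' \<odot> (\<omega> \<odot> \<one> v))) \<cdot> (\<one> t' \<odot> \<iota>1) = (\<pi>2 \<cdot> (\<omega> \<odot> \<one> v) \<cdot> \<iota>1 \<cdot> (\<psi>' \<odot> \<one> Vb) \<cdot> (\<one> t' \<odot> \<pi>1)) \<cdot> (\<one> t' \<odot> \<iota>1)"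
    by simp
  then have s3: "(\<psi>' \<odot> \<one> Wb) \<cdot> (\<one> t' \<odot> \<rho>) = \<rho> \<cdot> (\<psi>' \<odot> \<one> Vb)"
    unfolding \<rho>_def using hh by (simp add: e1 chain[OF e1])
  have x1: "(\<one> t' \<odot> \<pi>1) \<cdot> (\<eta>' \<odot> \<one> (V \<bullet> v)) = (\<eta>' \<odot> \<one> (v' \<bullet> Vb)) \<cdot> \<pi>1"
    using xch[of \<eta>' \<pi>1] by simp
  have x2: "(\<one> t' \<odot> (\<omega> \<odot> \<one> v)) \<cdot> (\<eta>' \<odot> \<one> (V \<bullet> v)) = (\<eta>' \<odot> \<one> (W \<bullet> v)) \<cdot> (\<omega> \<odot> \<one> v)"
    using xch[of \<eta>' "\<omega> \<odot> \<one> v"] hh by simp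
  have x3: "(\<one> t' \<odot> \<pi>2) \<cdot> (\<eta>' \<odot> \<one> (W \<bullet> v)) = (\<eta>' \<odot> \<one> (v' \<bullet> Wb)) \<cdot> \<pi>2"
    using xch[of \<eta>' \<pi>2] by simp
  have u1: "(\<psi>' \<odot> \<one> Vb) \<cdot> (\<eta>' \<odot> \<one> (v' \<bullet> Vb)) = \<one> (v' \<bullet> Vb)"
    using whisk[OF B.psi_unit, of "id1 K k'" Vb] by simp
  have u2: "(\<psi>' \<odot> \<one> Wb) \<cdot> (\<eta>' \<odot> \<one> (v' \<bullet> Wb)) = \<one> (v' \<bullet> Wb)"
    using whisk[OF B.psi_unit, of "id1 K k'" Wb] by simp
  from s2 have "((\<psi>' \<odot> \<one> Wb) \<cdot> (\<one> t' \<odot> \<pi>2) \<cdot> (\<one> t' \<odot> (\<omega> \<odot> \<one> v))) \<cdot> (\<eta>' \<odot> \<one> (V \<bullet> v)) = (\<pi>2 \<cdot> (\<omega> \<odot> \<one> v) \<cdot> \<iota>1 \<cdot> (\<psi>' \<odot> \<one> Vb) \<cdot> (\<one> t' \<odot> \<pi>1)) \<cdot> (\<eta>' \<odot> \<one> (V \<bullet> v))"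
    by simp
  then have s4: "\<pi>2 \<cdot> (\<omega> \<odot> \<one> v) = \<rho> \<cdot> \<pi>1"
    unfolding \<rho>_def using hh by (simp add: x1 chain[OF x1] x2 chain[OF x2] x3 chain[OF x3] u1 chain[OF u1] u2 chain[OF u2])
  have rh: "\<rho> \<in> hom2 K (v' \<bullet> Vb) (v' \<bullet> Wb)" unfolding \<rho>_def using hh by (intro hom2I) auto
  have "Vb \<in> hom1 K E E'" "Wb \<in> hom1 K E E'" by (auto intro!: hom1I)
  from B.v_full[OF this rh s3] obtain \<omega>b where "\<omega>b \<in> hom2 K Vb Wb" "\<one> v' \<odot> \<omega>b = \<rho>" by blast
  then show ?thesis using s4 by auto
qed

lemma ffP_uniq: "\<omega>b1 \<in> hom2 K Vb Wb \<Longrightarrow> \<omega>b2 \<in> hom2 K Vb Wb \<Longrightarrow> (\<one> v' \<odot> \<omega>b1) \<cdot> \<pi>1 = \<pi>2 \<cdot> (\<omega> \<odot> \<one> v) \<Longrightarrow>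
   (\<one> v' \<odot> \<omega>b2) \<cdot> \<pi>1 = \<pi>2 \<cdot> (\<omega> \<odot> \<one> v) \<Longrightarrow> \<omega>b1 = \<omega>b2"
proof -
  assume h: "\<omega>b1 \<in> hom2 K Vb Wb" "\<omega>b2 \<in> hom2 K Vb Wb" and c: "(\<one> v' \<odot> \<omega>b1) \<cdot> \<pi>1 = \<pi>2 \<cdot> (\<omega> \<odot> \<one> v)"
     "(\<one> v' \<odot> \<omega>b2) \<cdot> \<pi>1 = \<pi>2 \<cdot> (\<omega> \<odot> \<one> v)"
  note hh = hom2D[OF h(1)] hom2D[OF h(2)]
  have "\<one> v' \<odot> \<omega>b1 = (\<one> v' \<odot> \<omega>b1) \<cdot> \<pi>1 \<cdot> \<iota>1" using hh by (simp add: P.pi_iota)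
  also have "\<dots> = ((\<one> v' \<odot> \<omega>b1) \<cdot> \<pi>1) \<cdot> \<iota>1" using hh by simp
  also have "\<dots> = ((\<one> v' \<odot> \<omega>b2) \<cdot> \<pi>1) \<cdot> \<iota>1" using c by simp
  also have "\<dots> = \<one> v' \<odot> \<omega>b2" using hh by (simp add: P.pi_iota)
  finally have "\<one> v' \<odot> \<omega>b1 = \<one> v' \<odot> \<omega>b2" .
  then show ?thesis by (rule B.v_faithful[OF h(1) h(2), rotated 2]) (auto intro: hom1I)
qed

end

context main
begin

definition psiG where "psiG V Vb \<iota> \<pi> = ((\<iota> \<cdot> (\<psi>' \<odot> \<one> Vb) \<cdot> (\<one> t' \<odot> \<pi>)) \<odot> \<one> A.f) \<cdot> (\<one> t' \<odot> (\<one> V \<odot> \<eta>))"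

lemma eso: assumes sp: "idempotents_split K" and V: "V \<in> hom1 K k k'" and ph: "\<phi> \<in> hom2 K (t' \<bullet> V) (V \<bullet> t)"
  and c: "(\<one> V \<odot> \<mu>) \<cdot> (\<phi> \<odot> \<one> t) \<cdot> (\<one> t' \<odot> \<phi>) = \<phi> \<cdot> (\<mu>' \<odot> \<one> V)"
  shows "\<exists>Vb \<iota> \<pi>. (V,Vb,\<iota>,\<pi>) \<in> lift_obj K k E v k' E' v' \<and> psiG V Vb \<iota> \<pi> = \<phi>"
proof -
  note hv = hom1D[OF V] and hp = hom2D[OF ph]
  define \<alpha> where "\<alpha> = (\<one> V \<odot> \<psi>) \<cdot> (\<phi> \<odot> \<one> v)"
  have al[simp]: "\<alpha> \<in> cell K" "src2 K \<alpha> = t' \<bullet> V \<bullet> v" "tgt2 K \<alpha> = V \<bullet> v"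
    unfolding \<alpha>_def using hv hp by auto
  have x1: "(\<phi> \<odot> \<one> v) \<cdot> (\<one> t' \<odot> (\<one> V \<odot> \<psi>)) = (\<one> V \<odot> (\<one> t \<odot> \<psi>)) \<cdot> (\<phi> \<odot> \<one> (t \<bullet> v))"
    using xch[of \<phi> \<psi>] hv hp by simp
  have x2: "(\<one> V \<odot> \<psi>) \<cdot> (\<one> V \<odot> (\<one> t \<odot> \<psi>)) = (\<one> V \<odot> \<psi>) \<cdot> (\<one> V \<odot> (\<mu> \<odot> \<one> v))"
    using whisk[OF A.psi_assoc, of V "id1 K E"] hv by simp
  have x3: "(\<one> V \<odot> (\<mu> \<odot> \<one> v)) \<cdot> (\<phi> \<odot> \<one> (t \<bullet> v)) \<cdot> (\<one> t' \<odot> (\<phi> \<odot> \<one> v)) = (\<phi> \<odot> \<one> v) \<cdot> (\<mu>' \<odot> \<one> (V \<bullet> v))"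
    using whisk[OF c, of "id1 K k'" v] hv hp by simp
  have a_assoc: "\<alpha> \<cdot> (\<one> t' \<odot> \<alpha>) = \<alpha> \<cdot> (\<mu>' \<odot> \<one> (V \<bullet> v))"
    unfolding \<alpha>_def using hv hp by (simp add: x1 chain[OF x1] x2 chain[OF x2] x3 chain3[OF x3])
  have u1: "(\<mu>' \<odot> \<one> (V \<bullet> v)) \<cdot> (\<one> t' \<odot> (\<eta>' \<odot> \<one> (V \<bullet> v))) = \<one> (t' \<bullet> V \<bullet> v)"
    using whisk[OF B.mu_unit1, of "id1 K k'" "V \<bullet> v"] hv by simp
  have u2: "(\<mu>' \<odot> \<one> (V \<bullet> v)) \<cdot> (\<eta>' \<odot> \<one> (t' \<bullet> V \<bullet> v)) = \<one> (t' \<bullet> V \<bullet> v)"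
    using whisk[OF B.mu_unit2, of "id1 K k'" "V \<bullet> v"] hv by simp
  have a_te: "\<alpha> \<cdot> (\<one> t' \<odot> \<alpha>) \<cdot> (\<one> t' \<odot> (\<eta>' \<odot> \<one> (V \<bullet> v))) = \<alpha>"
    using hv by (simp add: a_assoc chain[OF a_assoc] u1)
  have x4: "(\<eta>' \<odot> \<one> (V \<bullet> v)) \<cdot> \<alpha> = (\<one> t' \<odot> \<alpha>) \<cdot> (\<eta>' \<odot> \<one> (t' \<bullet> V \<bullet> v))"
    using xch[of \<eta>' \<alpha>] hv by simp
  have a_ea: "\<alpha> \<cdot> (\<eta>' \<odot> \<one> (V \<bullet> v)) \<cdot> \<alpha> = \<alpha>"
    using hv by (simp add: x4 a_assoc chain[OF a_assoc] u2)
  define e where "e = \<alpha> \<cdot> (\<eta>' \<odot> \<one> (V \<bullet> v))"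
  have ee: "e \<in> cell K" "src2 K e = tgt2 K e" "e \<cdot> e = e"
    unfolding e_def using hv apply simp_all
    using a_ea hv by (simp add: chain3[OF a_ea])
  obtain X \<iota> \<pi> where X: "X \<in> arr K" and ih: "\<iota> \<in> hom2 K X (V \<bullet> v)" and ph2: "\<pi> \<in> hom2 K (V \<bullet> v) X"
     and ip: "\<iota> \<cdot> \<pi> = e" and pi: "\<pi> \<cdot> \<iota> = \<one> X"
  proof -
    have "\<exists>W \<iota> \<pi>. W \<in> arr K \<and> \<iota> \<in> hom2 K W (tgt2 K e) \<and> \<pi> \<in> hom2 K (src2 K e) W \<and>
               \<iota> \<cdot> \<pi> = e \<and> \<pi> \<cdot> \<iota> = \<one> W" using sp ee unfolding idempotents_split_def by blast
    moreover have "tgt2 K e = V \<bullet> v" "src2 K e = V \<bullet> v" unfolding e_def using hv by simp_all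
    ultimately show ?thesis using that by auto
  qed
  note hi = hom2D[OF ih] and hpi = hom2D[OF ph2]
  have Xs[simp]: "src1 K X = E" "tgt1 K X = k'" using cell_st[of \<iota>] hi hv by auto
  have ic[simp]: "\<iota> \<in> cell K" "src2 K \<iota> = X" "tgt2 K \<iota> = V \<bullet> v" "\<pi> \<in> cell K" "src2 K \<pi> = V \<bullet> v" "tgt2 K \<pi> = X"
    using hi hpi by auto
  have ip': "\<iota> \<cdot> \<pi> = \<alpha> \<cdot> (\<eta>' \<odot> \<one> (V \<bullet> v))" using ip e_def by simp
  define \<beta> where "\<beta> = \<pi> \<cdot> \<alpha> \<cdot> (\<one> t' \<odot> \<iota>)"
  have bc[simp]: "\<beta> \<in> cell K" "src2 K \<beta> = t' \<bullet> X" "tgt2 K \<beta> = X"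
    unfolding \<beta>_def using hv X by auto
  have y1: "(\<one> t' \<odot> \<iota>) \<cdot> (\<eta>' \<odot> \<one> X) = (\<eta>' \<odot> \<one> (V \<bullet> v)) \<cdot> \<iota>"
    using xch[of \<eta>' \<iota>] X by simp
  have b_unit: "\<beta> \<cdot> (\<eta>' \<odot> \<one> X) = \<one> X"
    unfolding \<beta>_def using hv X
    by (simp add: y1 chain[OF y1] ip'[symmetric] chain[OF ip'[symmetric]] pi chain[OF pi])
  have y2: "(\<one> t' \<odot> \<iota>) \<cdot> (\<one> t' \<odot> \<pi>) = (\<one> t' \<odot> \<alpha>) \<cdot> (\<one> t' \<odot> (\<eta>' \<odot> \<one> (V \<bullet> v)))"
    using whisk[OF ip', of t' "id1 K E"] hv X by simp
  have y3: "(\<one> t' \<odot> \<iota>) \<cdot> (\<mu>' \<odot> \<one> X) = (\<mu>' \<odot> \<one> (V \<bullet> v)) \<cdot> (\<one> t' \<odot> (\<one> t' \<odot> \<iota>))"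
    using xch[of \<mu>' \<iota>] X by simp
  have b_assoc: "\<beta> \<cdot> (\<one> t' \<odot> \<beta>) = \<beta> \<cdot> (\<mu>' \<odot> \<one> X)"
    unfolding \<beta>_def using hv X
    by (simp add: y2 chain[OF y2] a_assoc chain[OF a_assoc] u1 chain[OF u1] y3 chain[OF y3])
  have alg: "is_alg K k' t' \<mu>' \<eta>' E X \<beta>"
    unfolding is_alg_def wl_wr using b_unit b_assoc X by (auto intro!: hom1I hom2I)
  obtain Vb where Vb: "Vb \<in> hom1 K E E'" and vX: "v' \<bullet> Vb = X" and pb: "\<psi>' \<odot> \<one> Vb = \<beta>"
    using B.univ1[OF A.E_obj alg] by auto
  note hvb = hom1D[OF Vb]
  have lo: "(V,Vb,\<iota>,\<pi>) \<in> lift_obj K k E v k' E' v'"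
    unfolding lift_obj_def using V Vb ih ph2 pi vX by auto
  have z1: "\<alpha> \<cdot> (\<eta>' \<odot> \<one> (V \<bullet> v)) \<cdot> (\<alpha> \<cdot> r) = \<alpha> \<cdot> r" if "r \<in> cell K" "tgt2 K r = t' \<bullet> V \<bullet> v" for r
    using chain3[OF a_ea] that hv by simp
  have al2: "\<iota> \<cdot> \<beta> \<cdot> (\<one> t' \<odot> \<pi>) = \<alpha>"
    unfolding \<beta>_def using hv X
    by (simp add: a_ea ip' chain[OF ip'] z1 y2 chain[OF y2] a_te chain3[OF a_te])
  have x5: "(\<phi> \<odot> \<one> t) \<cdot> (\<one> t' \<odot> (\<one> V \<odot> \<eta>)) = (\<one> V \<odot> (\<one> t \<odot> \<eta>)) \<cdot> \<phi>"
    using xch[of \<phi> \<eta>] hv hp by simp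
  have x6: "(\<one> V \<odot> \<mu>) \<cdot> (\<one> V \<odot> (\<one> t \<odot> \<eta>)) = \<one> (V \<bullet> t)"
    using whisk[OF A.mu_unit1, of V "id1 K k"] hv by simp
  have "psiG V Vb \<iota> \<pi> = (\<alpha> \<odot> \<one> A.f) \<cdot> (\<one> t' \<odot> (\<one> V \<odot> \<eta>))"
    unfolding psiG_def using pb al2 vX by simp
  also have "\<dots> = \<phi>" unfolding \<alpha>_def using hv hp by (simp add: x5 chain[OF x5] x6 chain[OF x6])
  finally show ?thesis using lo by blast
qed

end

context lob
begin
lemma psiF_eq: "psiF = psiG V Vb \<iota> \<pi>"
  unfolding psiF_def alpha_def psiG_def ..

lemma Fo_obj: "(V, psiG V Vb \<iota> \<pi>) \<in> mnd_obj K k t \<mu> k' t' \<mu>'"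
  unfolding mnd_obj_def wl_wr psiF_eq[symmetric] using psiF_mnd by (auto intro!: hom1I hom2I)

lemma cidI: "(\<one> V, \<one> Vb) \<in> chom (LiftI K k E v k' E' v') (V,Vb,\<iota>,\<pi>) (V,Vb,\<iota>,\<pi>)"
  unfolding LiftI_def wl_wr by (auto intro!: hom2I)
lemma cidP: "(\<one> V, \<one> Vb) \<in> chom (LiftP K k E v k' E' v') (V,Vb,\<iota>,\<pi>) (V,Vb,\<iota>,\<pi>)"
  unfolding LiftP_def wl_wr by (auto intro!: hom2I)
end

context lob2
begin

lemma chomI_iff: "(\<omega>,\<omega>b) \<in> chom (LiftI K k E v k' E' v') (V,Vb,\<iota>1,\<pi>1) (W,Wb,\<iota>2,\<pi>2) \<longleftrightarrow>
   \<omega> \<in> hom2 K V W \<and> \<omega>b \<in> hom2 K Vb Wb \<and> \<iota>2 \<cdot> (\<one> v' \<odot> \<omega>b) = (\<omega> \<odot> \<one> v) \<cdot> \<iota>1"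
  unfolding LiftI_def wl_wr by simp
lemma chomP_iff: "(\<omega>,\<omega>b) \<in> chom (LiftP K k E v k' E' v') (V,Vb,\<iota>1,\<pi>1) (W,Wb,\<iota>2,\<pi>2) \<longleftrightarrow>
   \<omega> \<in> hom2 K V W \<and> \<omega>b \<in> hom2 K Vb Wb \<and> (\<one> v' \<odot> \<omega>b) \<cdot> \<pi>1 = \<pi>2 \<cdot> (\<omega> \<odot> \<one> v)"
  unfolding LiftP_def wl_wr by simp
lemma mchomI_iff: "\<omega> \<in> chom (MndI K k t \<mu> \<eta> k' t' \<mu>' \<eta>') (V, psiG V Vb \<iota>1 \<pi>1) (W, psiG W Wb \<iota>2 \<pi>2) \<longleftrightarrow>
   \<omega> \<in> hom2 K V W \<and> (\<omega> \<odot> \<one> t) \<cdot> P.psiF = (\<one> W \<odot> \<mu>) \<cdot> (Q.psiF \<odot> \<one> t) \<cdot> (\<one> t' \<odot> (\<omega> \<odot> \<one> t)) \<cdot> (\<one> t' \<odot> P.psiF) \<cdot> (\<one> t' \<odot> (\<eta>' \<odot> \<one> V))"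
  unfolding MndI_def wl_wr P.psiF_eq Q.psiF_eq by simp
lemma mchomP_iff: "\<omega> \<in> chom (MndP K k t \<mu> \<eta> k' t' \<mu>' \<eta>') (V, psiG V Vb \<iota>1 \<pi>1) (W, psiG W Wb \<iota>2 \<pi>2) \<longleftrightarrow>
   \<omega> \<in> hom2 K V W \<and> Q.psiF \<cdot> (\<one> t' \<odot> \<omega>) = (\<one> W \<odot> \<mu>) \<cdot> (Q.psiF \<odot> \<one> t) \<cdot> (\<eta>' \<odot> \<one> (W \<bullet> t)) \<cdot> (\<omega> \<odot> \<one> t) \<cdot> P.psiF"
proof -
  have e: "(\<eta>' \<odot> \<one> W) \<odot> \<one> t = \<eta>' \<odot> \<one> (W \<bullet> t)" by simp
  show ?thesis unfolding MndP_def wl_wr P.psiF_eq Q.psiF_eq e by simp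
qed

lemma FI_hom: "(\<omega>,\<omega>b) \<in> chom (LiftI K k E v k' E' v') (V,Vb,\<iota>1,\<pi>1) (W,Wb,\<iota>2,\<pi>2) \<Longrightarrow>
   \<omega> \<in> chom (MndI K k t \<mu> \<eta> k' t' \<mu>' \<eta>') (V, psiG V Vb \<iota>1 \<pi>1) (W, psiG W Wb \<iota>2 \<pi>2)"
  unfolding chomI_iff mchomI_iff using FI_mor by blast
lemma FP_hom: "(\<omega>,\<omega>b) \<in> chom (LiftP K k E v k' E' v') (V,Vb,\<iota>1,\<pi>1) (W,Wb,\<iota>2,\<pi>2) \<Longrightarrow>
   \<omega> \<in> chom (MndP K k t \<mu> \<eta> k' t' \<mu>' \<eta>') (V, psiG V Vb \<iota>1 \<pi>1) (W, psiG W Wb \<iota>2 \<pi>2)"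
  unfolding chomP_iff mchomP_iff using FP_mor by blast
lemma FI_full: "\<omega> \<in> chom (MndI K k t \<mu> \<eta> k' t' \<mu>' \<eta>') (V, psiG V Vb \<iota>1 \<pi>1) (W, psiG W Wb \<iota>2 \<pi>2) \<Longrightarrow>
   \<exists>\<omega>b. (\<omega>,\<omega>b) \<in> chom (LiftI K k E v k' E' v') (V,Vb,\<iota>1,\<pi>1) (W,Wb,\<iota>2,\<pi>2)"
  unfolding chomI_iff mchomI_iff using ffI_ex by blast
lemma FP_full: "\<omega> \<in> chom (MndP K k t \<mu> \<eta> k' t' \<mu>' \<eta>') (V, psiG V Vb \<iota>1 \<pi>1) (W, psiG W Wb \<iota>2 \<pi>2) \<Longrightarrow>
   \<exists>\<omega>b. (\<omega>,\<omega>b) \<in> chom (LiftP K k E v k' E' v') (V,Vb,\<iota>1,\<pi>1) (W,Wb,\<iota>2,\<pi>2)"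
  unfolding chomP_iff mchomP_iff using ffP_ex by blast
lemma FI_faith: "(\<omega>,\<omega>b1) \<in> chom (LiftI K k E v k' E' v') (V,Vb,\<iota>1,\<pi>1) (W,Wb,\<iota>2,\<pi>2) \<Longrightarrow>
   (\<omega>,\<omega>b2) \<in> chom (LiftI K k E v k' E' v') (V,Vb,\<iota>1,\<pi>1) (W,Wb,\<iota>2,\<pi>2) \<Longrightarrow> \<omega>b1 = \<omega>b2"
  unfolding chomI_iff using ffI_uniq by blast
lemma FP_faith: "(\<omega>,\<omega>b1) \<in> chom (LiftP K k E v k' E' v') (V,Vb,\<iota>1,\<pi>1) (W,Wb,\<iota>2,\<pi>2) \<Longrightarrow>
   (\<omega>,\<omega>b2) \<in> chom (LiftP K k E v k' E' v') (V,Vb,\<iota>1,\<pi>1) (W,Wb,\<iota>2,\<pi>2) \<Longrightarrow> \<omega>b1 = \<omega>b2"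
  unfolding chomP_iff using ffP_uniq by blast

end

context main
begin

lemma lob_i: "(V,Vb,\<iota>,\<pi>) \<in> lift_obj K k E v k' E' v' \<Longrightarrow> lob K k t \<mu> \<eta> E v \<psi> k' t' \<mu>' \<eta>' E' v' \<psi>' V Vb \<iota> \<pi>"
  by (intro lob.intro main_axioms) (simp add: lob_axioms_def)

lemma lob2_i: "(V,Vb,\<iota>1,\<pi>1) \<in> lift_obj K k E v k' E' v' \<Longrightarrow> (W,Wb,\<iota>2,\<pi>2) \<in> lift_obj K k E v k' E' v' \<Longrightarrow>
  lob2 K k t \<mu> \<eta> E v \<psi> k' t' \<mu>' \<eta>' E' v' \<psi>' V Vb \<iota>1 \<pi>1 W Wb \<iota>2 \<pi>2"
  by (intro lob2.intro main_axioms) (simp add: lob2_axioms_def)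

lemma compI: assumes o1: "(V1,Vb1,\<iota>1,\<pi>1) \<in> lift_obj K k E v k' E' v'" and o2: "(V2,Vb2,\<iota>2,\<pi>2) \<in> lift_obj K k E v k' E' v'"
  and o3: "(V3,Vb3,\<iota>3,\<pi>3) \<in> lift_obj K k E v k' E' v'"
  and f: "(\<omega>,\<omega>b) \<in> chom (LiftI K k E v k' E' v') (V1,Vb1,\<iota>1,\<pi>1) (V2,Vb2,\<iota>2,\<pi>2)"
  and g: "(\<omega>',\<omega>b') \<in> chom (LiftI K k E v k' E' v') (V2,Vb2,\<iota>2,\<pi>2) (V3,Vb3,\<iota>3,\<pi>3)"
  shows "(\<omega>' \<cdot> \<omega>, \<omega>b' \<cdot> \<omega>b) \<in> chom (LiftI K k E v k' E' v') (V1,Vb1,\<iota>1,\<pi>1) (V3,Vb3,\<iota>3,\<pi>3)"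
proof -
  interpret L1: lob K k t \<mu> \<eta> E v \<psi> k' t' \<mu>' \<eta>' E' v' \<psi>' V1 Vb1 \<iota>1 \<pi>1 by (rule lob_i[OF o1])
  interpret L2: lob K k t \<mu> \<eta> E v \<psi> k' t' \<mu>' \<eta>' E' v' \<psi>' V2 Vb2 \<iota>2 \<pi>2 by (rule lob_i[OF o2])
  interpret L3: lob K k t \<mu> \<eta> E v \<psi> k' t' \<mu>' \<eta>' E' v' \<psi>' V3 Vb3 \<iota>3 \<pi>3 by (rule lob_i[OF o3])
  from f have f': "\<omega> \<in> hom2 K V1 V2" "\<omega>b \<in> hom2 K Vb1 Vb2" and c1: "\<iota>2 \<cdot> (\<one> v' \<odot> \<omega>b) = (\<omega> \<odot> \<one> v) \<cdot> \<iota>1"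
    unfolding LiftI_def wl_wr by auto
  from g have g': "\<omega>' \<in> hom2 K V2 V3" "\<omega>b' \<in> hom2 K Vb2 Vb3" and c2: "\<iota>3 \<cdot> (\<one> v' \<odot> \<omega>b') = (\<omega>' \<odot> \<one> v) \<cdot> \<iota>2"
    unfolding LiftI_def wl_wr by auto
  note h = hom2D[OF f'(1)] hom2D[OF f'(2)] hom2D[OF g'(1)] hom2D[OF g'(2)]
  show ?thesis unfolding LiftI_def wl_wr using h
    by (auto intro!: hom2I simp: c1 chain[OF c1] c2 chain[OF c2])
qed

lemma compP: assumes o1: "(V1,Vb1,\<iota>1,\<pi>1) \<in> lift_obj K k E v k' E' v'" and o2: "(V2,Vb2,\<iota>2,\<pi>2) \<in> lift_obj K k E v k' E' v'"
  and o3: "(V3,Vb3,\<iota>3,\<pi>3) \<in> lift_obj K k E v k' E' v'"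
  and f: "(\<omega>,\<omega>b) \<in> chom (LiftP K k E v k' E' v') (V1,Vb1,\<iota>1,\<pi>1) (V2,Vb2,\<iota>2,\<pi>2)"
  and g: "(\<omega>',\<omega>b') \<in> chom (LiftP K k E v k' E' v') (V2,Vb2,\<iota>2,\<pi>2) (V3,Vb3,\<iota>3,\<pi>3)"
  shows "(\<omega>' \<cdot> \<omega>, \<omega>b' \<cdot> \<omega>b) \<in> chom (LiftP K k E v k' E' v') (V1,Vb1,\<iota>1,\<pi>1) (V3,Vb3,\<iota>3,\<pi>3)"
proof -
  interpret L1: lob K k t \<mu> \<eta> E v \<psi> k' t' \<mu>' \<eta>' E' v' \<psi>' V1 Vb1 \<iota>1 \<pi>1 by (rule lob_i[OF o1])
  interpret L2: lob K k t \<mu> \<eta> E v \<psi> k' t' \<mu>' \<eta>' E' v' \<psi>' V2 Vb2 \<iota>2 \<pi>2 by (rule lob_i[OF o2])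
  interpret L3: lob K k t \<mu> \<eta> E v \<psi> k' t' \<mu>' \<eta>' E' v' \<psi>' V3 Vb3 \<iota>3 \<pi>3 by (rule lob_i[OF o3])
  from f have f': "\<omega> \<in> hom2 K V1 V2" "\<omega>b \<in> hom2 K Vb1 Vb2" and c1: "(\<one> v' \<odot> \<omega>b) \<cdot> \<pi>1 = \<pi>2 \<cdot> (\<omega> \<odot> \<one> v)"
    unfolding LiftP_def wl_wr by auto
  from g have g': "\<omega>' \<in> hom2 K V2 V3" "\<omega>b' \<in> hom2 K Vb2 Vb3" and c2: "(\<one> v' \<odot> \<omega>b') \<cdot> \<pi>2 = \<pi>3 \<cdot> (\<omega>' \<odot> \<one> v)"
    unfolding LiftP_def wl_wr by auto
  note h = hom2D[OF f'(1)] hom2D[OF f'(2)] hom2D[OF g'(1)] hom2D[OF g'(2)]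
  show ?thesis unfolding LiftP_def wl_wr using h
    by (auto intro!: hom2I simp: c1 chain[OF c1] c2 chain[OF c2])
qed

end

context main
begin

definition FoL where "FoL = (\<lambda>(V,Vb,\<iota>,\<pi>). (V, psiG V Vb \<iota> \<pi>))"
definition FmL :: "'m \<times> 'm \<times> 'c \<times> 'c \<Rightarrow> 'm \<times> 'm \<times> 'c \<times> 'c \<Rightarrow> 'c \<times> 'c \<Rightarrow> 'c" where "FmL = (\<lambda>A B (\<omega>,\<omega>b). \<omega>)"

lemma cobjs: "cobj (LiftI K k E v k' E' v') = lift_obj K k E v k' E' v'"
  "cobj (LiftP K k E v k' E' v') = lift_obj K k E v k' E' v'"
  "cobj (MndI K k t \<mu> \<eta> k' t' \<mu>' \<eta>') = mnd_obj K k t \<mu> k' t' \<mu>'"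
  "cobj (MndP K k t \<mu> \<eta> k' t' \<mu>' \<eta>') = mnd_obj K k t \<mu> k' t' \<mu>'"
  by (simp_all add: LiftI_def LiftP_def MndI_def MndP_def)

lemma cid_L: "cid (LiftI K k E v k' E' v') (V,Vb,\<iota>,\<pi>) = (\<one> V, \<one> Vb)"
  "cid (LiftP K k E v k' E' v') (V,Vb,\<iota>,\<pi>) = (\<one> V, \<one> Vb)"
  by (simp_all add: LiftI_def LiftP_def)

lemma tup4: "(\<And>V Vb \<iota> \<pi>. A = (V,Vb,\<iota>,\<pi>) \<Longrightarrow> P) \<Longrightarrow> P" by (cases A) auto

lemma mnd_chom_hom: "g \<in> chom (MndI K k t \<mu> \<eta> k' t' \<mu>' \<eta>') (V,\<phi>) (W,\<phi>') \<Longrightarrow> g \<in> hom2 K V W"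
  "g \<in> chom (MndP K k t \<mu> \<eta> k' t' \<mu>' \<eta>') (V,\<phi>) (W,\<phi>') \<Longrightarrow> g \<in> hom2 K V W"
  by (simp_all add: MndI_def MndP_def)

lemma equivI: assumes sp: "idempotents_split K"
  shows "is_equivalence (LiftI K k E v k' E' v') (MndI K k t \<mu> \<eta> k' t' \<mu>' \<eta>') FoL FmL"
proof (rule equiv_ff_surj)
  show "is_functor (LiftI K k E v k' E' v') (MndI K k t \<mu> \<eta> k' t' \<mu>' \<eta>') FoL FmL"
    unfolding is_functor_def cobjs
  proof (intro conjI ballI)
    fix A assume a: "A \<in> lift_obj K k E v k' E' v'"
    show "FoL A \<in> mnd_obj K k t \<mu> k' t' \<mu>'"
      by (rule tup4[of A]) (use a in \<open>simp add: FoL_def cobjs lob.Fo_obj[OF lob_i]\<close>)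
  next
    fix A B f assume a: "A \<in> lift_obj K k E v k' E' v'" "B \<in> lift_obj K k E v k' E' v'"
      "f \<in> chom (LiftI K k E v k' E' v') A B"
    show "FmL A B f \<in> chom (MndI K k t \<mu> \<eta> k' t' \<mu>' \<eta>') (FoL A) (FoL B)"
      apply (rule tup4[of A], rule tup4[of B], cases f)
      using a by (simp add: FoL_def FmL_def lob2.FI_hom[OF lob2_i])
  next
    fix A B X f g assume a: "A \<in> lift_obj K k E v k' E' v'" "B \<in> lift_obj K k E v k' E' v'" "X \<in> lift_obj K k E v k' E' v'"
      "f \<in> chom (LiftI K k E v k' E' v') A B" "g \<in> chom (LiftI K k E v k' E' v') B X"
    show "FmL A X (ccomp (LiftI K k E v k' E' v') g f) = ccomp (MndI K k t \<mu> \<eta> k' t' \<mu>' \<eta>') (FmL B X g) (FmL A B f)"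
      by (cases f, cases g) (simp add: FmL_def LiftI_def MndI_def)
  next
    fix A assume a: "A \<in> lift_obj K k E v k' E' v'"
    show "FmL A A (cid (LiftI K k E v k' E' v') A) = cid (MndI K k t \<mu> \<eta> k' t' \<mu>' \<eta>') (FoL A)"
      by (rule tup4[of A]) (simp add: FmL_def FoL_def LiftI_def MndI_def)
  qed
next
  fix A B g assume a: "A \<in> cobj (LiftI K k E v k' E' v')" "B \<in> cobj (LiftI K k E v k' E' v')"
    "g \<in> chom (MndI K k t \<mu> \<eta> k' t' \<mu>' \<eta>') (FoL A) (FoL B)"
  show "\<exists>f\<in>chom (LiftI K k E v k' E' v') A B. FmL A B f = g"
  proof (rule tup4[of A], rule tup4[of B])
    fix V Vb \<iota> \<pi> W Wb \<iota>' \<pi>' assume e: "A = (V,Vb,\<iota>,\<pi>)" "B = (W,Wb,\<iota>',\<pi>')"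
    then obtain gb where "(g,gb) \<in> chom (LiftI K k E v k' E' v') A B"
      using lob2.FI_full[OF lob2_i, of V Vb \<iota> \<pi> W Wb \<iota>' \<pi>' g] a by (auto simp: FoL_def cobjs)
    then show ?thesis unfolding FmL_def by (intro bexI[of _ "(g,gb)"]) auto
  qed
next
  fix A B f1 f2 assume a: "A \<in> cobj (LiftI K k E v k' E' v')" "B \<in> cobj (LiftI K k E v k' E' v')"
    "f1 \<in> chom (LiftI K k E v k' E' v') A B" "f2 \<in> chom (LiftI K k E v k' E' v') A B" "FmL A B f1 = FmL A B f2"
  show "f1 = f2"
    apply (rule tup4[of A], rule tup4[of B], cases f1, cases f2)
    using a lob2.FI_faith[OF lob2_i] by (auto simp: FmL_def cobjs)
next
  fix Y assume y: "Y \<in> cobj (MndI K k t \<mu> \<eta> k' t' \<mu>' \<eta>')"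
  obtain V \<phi> where Y: "Y = (V,\<phi>)" by (cases Y)
  have "V \<in> hom1 K k k'" "\<phi> \<in> hom2 K (t' \<bullet> V) (V \<bullet> t)"
    "(\<one> V \<odot> \<mu>) \<cdot> (\<phi> \<odot> \<one> t) \<cdot> (\<one> t' \<odot> \<phi>) = \<phi> \<cdot> (\<mu>' \<odot> \<one> V)"
    using y unfolding Y cobjs mnd_obj_def wl_wr by auto
  from eso[OF sp this] obtain Vb \<iota> \<pi> where "(V,Vb,\<iota>,\<pi>) \<in> lift_obj K k E v k' E' v'" "psiG V Vb \<iota> \<pi> = \<phi>" by blast
  then show "\<exists>A\<in>cobj (LiftI K k E v k' E' v'). FoL A = Y" unfolding Y cobjs FoL_def by force
next
  fix A assume a: "A \<in> cobj (LiftI K k E v k' E' v')"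
  show "cid (LiftI K k E v k' E' v') A \<in> chom (LiftI K k E v k' E' v') A A"
    by (rule tup4[of A]) (use a in \<open>simp add: cobjs lob.cidI[OF lob_i] cid_L\<close>)
next
  fix A B X f g assume a: "A \<in> cobj (LiftI K k E v k' E' v')" "B \<in> cobj (LiftI K k E v k' E' v')" "X \<in> cobj (LiftI K k E v k' E' v')"
    "f \<in> chom (LiftI K k E v k' E' v') A B" "g \<in> chom (LiftI K k E v k' E' v') B X"
  show "ccomp (LiftI K k E v k' E' v') g f \<in> chom (LiftI K k E v k' E' v') A X"
    apply (rule tup4[of A], rule tup4[of B], rule tup4[of X], cases f, cases g)
    using a compI by (auto simp: cobjs LiftI_def[of K k E v k' E' v'] simp del: chom_def)
next
  fix X Y g assume a: "X \<in> cobj (MndI K k t \<mu> \<eta> k' t' \<mu>' \<eta>')" "Y \<in> cobj (MndI K k t \<mu> \<eta> k' t' \<mu>' \<eta>')"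
    "g \<in> chom (MndI K k t \<mu> \<eta> k' t' \<mu>' \<eta>') X Y"
  obtain V \<phi> W \<phi>' where e: "X = (V,\<phi>)" "Y = (W,\<phi>')" by (cases X, cases Y)
  have "g \<in> hom2 K V W" using a(3) unfolding e by (rule mnd_chom_hom)
  then show "ccomp (MndI K k t \<mu> \<eta> k' t' \<mu>' \<eta>') (cid (MndI K k t \<mu> \<eta> k' t' \<mu>' \<eta>') Y) g = g \<and>
        ccomp (MndI K k t \<mu> \<eta> k' t' \<mu>' \<eta>') g (cid (MndI K k t \<mu> \<eta> k' t' \<mu>' \<eta>') X) = g"
    unfolding e by (drule_tac hom2D) (simp add: MndI_def)
qed


lemma equivP: assumes sp: "idempotents_split K"
  shows "is_equivalence (LiftP K k E v k' E' v') (MndP K k t \<mu> \<eta> k' t' \<mu>' \<eta>') FoL FmL"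
proof (rule equiv_ff_surj)
  show "is_functor (LiftP K k E v k' E' v') (MndP K k t \<mu> \<eta> k' t' \<mu>' \<eta>') FoL FmL"
    unfolding is_functor_def cobjs
  proof (intro conjI ballI)
    fix A assume a: "A \<in> lift_obj K k E v k' E' v'"
    show "FoL A \<in> mnd_obj K k t \<mu> k' t' \<mu>'"
      by (rule tup4[of A]) (use a in \<open>simp add: FoL_def cobjs lob.Fo_obj[OF lob_i]\<close>)
  next
    fix A B f assume a: "A \<in> lift_obj K k E v k' E' v'" "B \<in> lift_obj K k E v k' E' v'"
      "f \<in> chom (LiftP K k E v k' E' v') A B"
    show "FmL A B f \<in> chom (MndP K k t \<mu> \<eta> k' t' \<mu>' \<eta>') (FoL A) (FoL B)"
      apply (rule tup4[of A], rule tup4[of B], cases f)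
      using a by (simp add: FoL_def FmL_def lob2.FP_hom[OF lob2_i])
  next
    fix A B X f g assume a: "A \<in> lift_obj K k E v k' E' v'" "B \<in> lift_obj K k E v k' E' v'" "X \<in> lift_obj K k E v k' E' v'"
      "f \<in> chom (LiftP K k E v k' E' v') A B" "g \<in> chom (LiftP K k E v k' E' v') B X"
    show "FmL A X (ccomp (LiftP K k E v k' E' v') g f) = ccomp (MndP K k t \<mu> \<eta> k' t' \<mu>' \<eta>') (FmL B X g) (FmL A B f)"
      by (cases f, cases g) (simp add: FmL_def LiftP_def MndP_def)
  next
    fix A assume a: "A \<in> lift_obj K k E v k' E' v'"
    show "FmL A A (cid (LiftP K k E v k' E' v') A) = cid (MndP K k t \<mu> \<eta> k' t' \<mu>' \<eta>') (FoL A)"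
      by (rule tup4[of A]) (simp add: FmL_def FoL_def LiftP_def MndP_def)
  qed
next
  fix A B g assume a: "A \<in> cobj (LiftP K k E v k' E' v')" "B \<in> cobj (LiftP K k E v k' E' v')"
    "g \<in> chom (MndP K k t \<mu> \<eta> k' t' \<mu>' \<eta>') (FoL A) (FoL B)"
  show "\<exists>f\<in>chom (LiftP K k E v k' E' v') A B. FmL A B f = g"
  proof (rule tup4[of A], rule tup4[of B])
    fix V Vb \<iota> \<pi> W Wb \<iota>' \<pi>' assume e: "A = (V,Vb,\<iota>,\<pi>)" "B = (W,Wb,\<iota>',\<pi>')"
    then obtain gb where "(g,gb) \<in> chom (LiftP K k E v k' E' v') A B"
      using lob2.FP_full[OF lob2_i, of V Vb \<iota> \<pi> W Wb \<iota>' \<pi>' g] a by (auto simp: FoL_def cobjs)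
    then show ?thesis unfolding FmL_def by (intro bexI[of _ "(g,gb)"]) auto
  qed
next
  fix A B f1 f2 assume a: "A \<in> cobj (LiftP K k E v k' E' v')" "B \<in> cobj (LiftP K k E v k' E' v')"
    "f1 \<in> chom (LiftP K k E v k' E' v') A B" "f2 \<in> chom (LiftP K k E v k' E' v') A B" "FmL A B f1 = FmL A B f2"
  show "f1 = f2"
    apply (rule tup4[of A], rule tup4[of B], cases f1, cases f2)
    using a lob2.FP_faith[OF lob2_i] by (auto simp: FmL_def cobjs)
next
  fix Y assume y: "Y \<in> cobj (MndP K k t \<mu> \<eta> k' t' \<mu>' \<eta>')"
  obtain V \<phi> where Y: "Y = (V,\<phi>)" by (cases Y)
  have "V \<in> hom1 K k k'" "\<phi> \<in> hom2 K (t' \<bullet> V) (V \<bullet> t)"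
    "(\<one> V \<odot> \<mu>) \<cdot> (\<phi> \<odot> \<one> t) \<cdot> (\<one> t' \<odot> \<phi>) = \<phi> \<cdot> (\<mu>' \<odot> \<one> V)"
    using y unfolding Y cobjs mnd_obj_def wl_wr by auto
  from eso[OF sp this] obtain Vb \<iota> \<pi> where "(V,Vb,\<iota>,\<pi>) \<in> lift_obj K k E v k' E' v'" "psiG V Vb \<iota> \<pi> = \<phi>" by blast
  then show "\<exists>A\<in>cobj (LiftP K k E v k' E' v'). FoL A = Y" unfolding Y cobjs FoL_def by force
next
  fix A assume a: "A \<in> cobj (LiftP K k E v k' E' v')"
  show "cid (LiftP K k E v k' E' v') A \<in> chom (LiftP K k E v k' E' v') A A"
    by (rule tup4[of A]) (use a in \<open>simp add: cobjs lob.cidP[OF lob_i] cid_L\<close>)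
next
  fix A B X f g assume a: "A \<in> cobj (LiftP K k E v k' E' v')" "B \<in> cobj (LiftP K k E v k' E' v')" "X \<in> cobj (LiftP K k E v k' E' v')"
    "f \<in> chom (LiftP K k E v k' E' v') A B" "g \<in> chom (LiftP K k E v k' E' v') B X"
  show "ccomp (LiftP K k E v k' E' v') g f \<in> chom (LiftP K k E v k' E' v') A X"
    apply (rule tup4[of A], rule tup4[of B], rule tup4[of X], cases f, cases g)
    using a compP by (auto simp: cobjs LiftP_def[of K k E v k' E' v'] simp del: chom_def)
next
  fix X Y g assume a: "X \<in> cobj (MndP K k t \<mu> \<eta> k' t' \<mu>' \<eta>')" "Y \<in> cobj (MndP K k t \<mu> \<eta> k' t' \<mu>' \<eta>')"
    "g \<in> chom (MndP K k t \<mu> \<eta> k' t' \<mu>' \<eta>') X Y"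
  obtain V \<phi> W \<phi>' where e: "X = (V,\<phi>)" "Y = (W,\<phi>')" by (cases X, cases Y)
  have "g \<in> hom2 K V W" using a(3) unfolding e by (rule mnd_chom_hom)
  then show "ccomp (MndP K k t \<mu> \<eta> k' t' \<mu>' \<eta>') (cid (MndP K k t \<mu> \<eta> k' t' \<mu>' \<eta>') Y) g = g \<and>
        ccomp (MndP K k t \<mu> \<eta> k' t' \<mu>' \<eta>') g (cid (MndP K k t \<mu> \<eta> k' t' \<mu>' \<eta>') X) = g"
    unfolding e by (drule_tac hom2D) (simp add: MndP_def)
qed

end

locale mono = emo K k t \<mu> \<eta> E v \<psi> for K :: "('o,'m,'c) twocat" and k t \<mu> \<eta> E v \<psi>

sublocale mono \<subseteq> M: main K k t \<mu> \<eta> E v \<psi> k t \<mu> \<eta> E v \<psi> by unfold_locales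

context mono
begin

lemma tens_obj: assumes o1: "(V',Vb',\<iota>',\<pi>') \<in> lift_obj K k E v k E v" and o2: "(V,Vb,\<iota>,\<pi>) \<in> lift_obj K k E v k E v"
  shows "lift_tensor K (V',Vb',\<iota>',\<pi>') (V,Vb,\<iota>,\<pi>) \<in> lift_obj K k E v k E v"
proof -
  interpret L1: lob K k t \<mu> \<eta> E v \<psi> k t \<mu> \<eta> E v \<psi> V' Vb' \<iota>' \<pi>' by (rule M.lob_i[OF o1])
  interpret L2: lob K k t \<mu> \<eta> E v \<psi> k t \<mu> \<eta> E v \<psi> V Vb \<iota> \<pi> by (rule M.lob_i[OF o2])
  have e1: "(\<one> V' \<odot> \<pi>) \<cdot> (\<one> V' \<odot> \<iota>) = \<one> (V' \<bullet> v \<bullet> Vb)"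
    using whisk[OF L2.pi_iota, of V' "id1 K E"] by simp
  have e2: "(\<pi>' \<odot> \<one> Vb) \<cdot> (\<iota>' \<odot> \<one> Vb) = \<one> (v \<bullet> Vb' \<bullet> Vb)"
    using whisk[OF L1.pi_iota, of "id1 K k" Vb] by simp
  show ?thesis unfolding lift_tensor_def lift_obj_def wl_wr
    by (auto intro!: hom1I hom2I simp: e1 chain[OF e1] e2)
qed

lemma tens_F: assumes o1: "(V',Vb',\<iota>',\<pi>') \<in> lift_obj K k E v k E v" and o2: "(V,Vb,\<iota>,\<pi>) \<in> lift_obj K k E v k E v"
  shows "M.psiG (V' \<bullet> V) (Vb' \<bullet> Vb) ((\<one> V' \<odot> \<iota>) \<cdot> (\<iota>' \<odot> \<one> Vb)) ((\<pi>' \<odot> \<one> Vb) \<cdot> (\<one> V' \<odot> \<pi>))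
     = (\<one> V' \<odot> M.psiG V Vb \<iota> \<pi>) \<cdot> (M.psiG V' Vb' \<iota>' \<pi>' \<odot> \<one> V)"
proof -
  interpret L1: lob K k t \<mu> \<eta> E v \<psi> k t \<mu> \<eta> E v \<psi> V' Vb' \<iota>' \<pi>' by (rule M.lob_i[OF o1])
  interpret L2: lob K k t \<mu> \<eta> E v \<psi> k t \<mu> \<eta> E v \<psi> V Vb \<iota> \<pi> by (rule M.lob_i[OF o2])
  define a' where "a' = \<iota>' \<cdot> (\<psi> \<odot> \<one> Vb') \<cdot> (\<one> t \<odot> \<pi>')"
  have a'c[simp]: "a' \<in> cell K" "src2 K a' = t \<bullet> V' \<bullet> v" "tgt2 K a' = V' \<bullet> v" unfolding a'_def by auto
  have pA': "M.psiG V' Vb' \<iota>' \<pi>' = (a' \<odot> \<one> f) \<cdot> (\<one> t \<odot> (\<one> V' \<odot> \<eta>))"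
    unfolding M.psiG_def a'_def ..
  have r1: "(\<one> V' \<odot> (\<one> t \<odot> (\<one> V \<odot> \<eta>))) \<cdot> (a' \<odot> \<one> (f \<bullet> V)) = (a' \<odot> \<one> (f \<bullet> V \<bullet> t)) \<cdot> (\<one> t \<odot> (\<one> V' \<odot> (\<one> t \<odot> (\<one> V \<odot> \<eta>))))"
    using xch[of a' "\<one> f \<odot> (\<one> V \<odot> \<eta>)"] by simp
  have r2: "(\<one> V' \<odot> (\<one> t \<odot> (\<pi> \<odot> \<one> f))) \<cdot> (a' \<odot> \<one> (f \<bullet> V \<bullet> t)) = (a' \<odot> \<one> (f \<bullet> v \<bullet> Vb \<bullet> f)) \<cdot> (\<one> t \<odot> (\<one> V' \<odot> (\<one> t \<odot> (\<pi> \<odot> \<one> f))))"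
    using xch[of a' "\<one> f \<odot> (\<pi> \<odot> \<one> f)"] by simp
  have r3: "(\<one> V' \<odot> (\<psi> \<odot> \<one> (Vb \<bullet> f))) \<cdot> (a' \<odot> \<one> (f \<bullet> v \<bullet> Vb \<bullet> f)) = (a' \<odot> \<one> (Vb \<bullet> f)) \<cdot> (\<one> t \<odot> (\<one> V' \<odot> (\<psi> \<odot> \<one> (Vb \<bullet> f))))"
    using xch[of a' "eps \<odot> \<one> (Vb \<bullet> f)"] by simp
  have b4: "(\<one> t \<odot> (\<one> V \<odot> \<eta>)) \<cdot> (\<eta> \<odot> \<one> V) = (\<eta> \<odot> \<one> (V \<bullet> t)) \<cdot> (\<one> V \<odot> \<eta>)"
    using xch[of \<eta> "\<one> V \<odot> \<eta>"] by simp
  have r4: "(\<one> t \<odot> (\<one> V' \<odot> (\<one> t \<odot> (\<one> V \<odot> \<eta>)))) \<cdot> (\<one> t \<odot> (\<one> V' \<odot> (\<eta> \<odot> \<one> V))) = (\<one> t \<odot> (\<one> V' \<odot> (\<eta> \<odot> \<one> (V \<bullet> t)))) \<cdot> (\<one> t \<odot> (\<one> V' \<odot> (\<one> V \<odot> \<eta>)))"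
    using whisk[OF b4, of "t \<bullet> V'" "id1 K k"] by simp
  have b5: "(\<one> t \<odot> (\<pi> \<odot> \<one> f)) \<cdot> (\<eta> \<odot> \<one> (V \<bullet> t)) = (\<eta> \<odot> \<one> (v \<bullet> Vb \<bullet> f)) \<cdot> (\<pi> \<odot> \<one> f)"
    using xch[of \<eta> "\<pi> \<odot> \<one> f"] by simp
  have r5: "(\<one> t \<odot> (\<one> V' \<odot> (\<one> t \<odot> (\<pi> \<odot> \<one> f)))) \<cdot> (\<one> t \<odot> (\<one> V' \<odot> (\<eta> \<odot> \<one> (V \<bullet> t)))) = (\<one> t \<odot> (\<one> V' \<odot> (\<eta> \<odot> \<one> (v \<bullet> Vb \<bullet> f)))) \<cdot> (\<one> t \<odot> (\<one> V' \<odot> (\<pi> \<odot> \<one> f)))"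
    using whisk[OF b5, of "t \<bullet> V'" "id1 K k"] by simp
  have r6: "(\<one> t \<odot> (\<one> V' \<odot> (\<psi> \<odot> \<one> (Vb \<bullet> f)))) \<cdot> (\<one> t \<odot> (\<one> V' \<odot> (\<eta> \<odot> \<one> (v \<bullet> Vb \<bullet> f)))) = \<one> (t \<bullet> V' \<bullet> v \<bullet> Vb \<bullet> f)"
    using whisk[OF psi_unit, of "t \<bullet> V'" "Vb \<bullet> f"] by simp
  have "(\<one> V' \<odot> M.psiG V Vb \<iota> \<pi>) \<cdot> (M.psiG V' Vb' \<iota>' \<pi>' \<odot> \<one> V) =
     (\<one> V' \<odot> (\<iota> \<odot> \<one> f)) \<cdot> (a' \<odot> \<one> (Vb \<bullet> f)) \<cdot> (\<one> t \<odot> (\<one> V' \<odot> (\<pi> \<odot> \<one> f))) \<cdot> (\<one> t \<odot> (\<one> V' \<odot> (\<one> V \<odot> \<eta>)))"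
    unfolding pA' unfolding M.psiG_def
    by (simp add: r1 chain[OF r1] r2 chain[OF r2] r3 chain[OF r3] r4 chain[OF r4] r5 chain[OF r5] r6 chain[OF r6])
  also have "\<dots> = M.psiG (V' \<bullet> V) (Vb' \<bullet> Vb) ((\<one> V' \<odot> \<iota>) \<cdot> (\<iota>' \<odot> \<one> Vb)) ((\<pi>' \<odot> \<one> Vb) \<cdot> (\<one> V' \<odot> \<pi>))"
    unfolding a'_def M.psiG_def by simp
  finally show ?thesis by simp
qed

lemma unit_obj: "lift_unit K k E v \<in> lift_obj K k E v k E v"
  unfolding lift_unit_def lift_obj_def by (auto intro!: hom1I hom2I)

lemma unit_F: "M.psiG (id1 K k) (id1 K E) (\<one> v) (\<one> v) = \<one> t"
  unfolding M.psiG_def by (simp add: mu_unit1)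

end

context mono
begin

lemma sm_I: assumes sp: "idempotents_split K"
  shows "monoidally_equivalent
           (LiftI K k E v k E v) (lift_tensor K) (lift_tensor_arr K) (lift_unit K k E v)
           (MndI K k t \<mu> \<eta> k t \<mu> \<eta>) (mnd_tensor K) (hcomp K) (mnd_unit K k t)"
proof -
  let ?C = "LiftI K k E v k E v" and ?D = "MndI K k t \<mu> \<eta> k t \<mu> \<eta>"
  have eq: "is_equivalence ?C ?D M.FoL M.FmL" by (rule M.equivI[OF sp])
  then have F: "is_functor ?C ?D M.FoL M.FmL" unfolding is_equivalence_def by blast
  have ccD: "ccomp ?D = vcomp K" by (simp add: MndI_def)
  have cidD: "\<And>V \<phi>. cid ?D (V,\<phi>) = \<one> V" by (simp add: MndI_def)
  have FoL: "\<And>V Vb \<iota> \<pi>. M.FoL (V,Vb,\<iota>,\<pi>) = (V, M.psiG V Vb \<iota> \<pi>)" by (simp add: M.FoL_def)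
  have idD: "\<And>A. A \<in> lift_obj K k E v k E v \<Longrightarrow> cid ?D (M.FoL A) \<in> chom ?D (M.FoL A) (M.FoL A)"
  proof -
    fix A assume a: "A \<in> lift_obj K k E v k E v"
    have "cid ?C A \<in> chom ?C A A"
      by (rule M.tup4[of A]) (use a in \<open>simp add: M.cid_L lob.cidI[OF M.lob_i]\<close>)
    note Fd = F[unfolded is_functor_def M.cobjs]
    have h1: "M.FmL A A (cid ?C A) \<in> chom ?D (M.FoL A) (M.FoL A)"
      using Fd[THEN conjunct2, THEN conjunct1] a \<open>cid ?C A \<in> chom ?C A A\<close> by blast
    have h2: "M.FmL A A (cid ?C A) = cid ?D (M.FoL A)"
      using Fd[THEN conjunct2, THEN conjunct2, THEN conjunct2] a by blast
    show "cid ?D (M.FoL A) \<in> chom ?D (M.FoL A) (M.FoL A)" using h1 h2 by simp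
  qed
  have isoid: "\<And>A. A \<in> lift_obj K k E v k E v \<Longrightarrow> is_iso ?D (M.FoL A) (M.FoL A) (cid ?D (M.FoL A))"
  proof -
    fix A assume a: "A \<in> lift_obj K k E v k E v"
    show "is_iso ?D (M.FoL A) (M.FoL A) (cid ?D (M.FoL A))"
    proof (rule M.tup4[of A])
      fix V Vb \<iota> \<pi> assume e: "A = (V,Vb,\<iota>,\<pi>)"
      have "V \<in> arr K" using a e unfolding lift_obj_def hom1_def by auto
      then show ?thesis unfolding is_iso_def using idD[OF a] e
        by (intro conjI bexI[of _ "cid ?D (M.FoL A)"]) (simp_all add: FoL cidD ccD)
    qed
  qed
  have Vt: "\<And>V Vb \<iota> \<pi>. (V,Vb,\<iota>,\<pi>) \<in> lift_obj K k E v k E v \<Longrightarrow> V \<in> arr K \<and> src1 K V = k \<and> tgt1 K V = k"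
    unfolding lift_obj_def hom1_def by auto
  have tensF: "\<And>A B. A \<in> lift_obj K k E v k E v \<Longrightarrow> B \<in> lift_obj K k E v k E v \<Longrightarrow>
      mnd_tensor K (M.FoL A) (M.FoL B) = M.FoL (lift_tensor K A B)"
  proof -
    fix A B assume a: "A \<in> lift_obj K k E v k E v" "B \<in> lift_obj K k E v k E v"
    show "mnd_tensor K (M.FoL A) (M.FoL B) = M.FoL (lift_tensor K A B)"
      by (rule M.tup4[of A], rule M.tup4[of B]) (use a in \<open>simp add: FoL mnd_tensor_def lift_tensor_def wl_wr tens_F\<close>)
  qed
  show ?thesis unfolding monoidally_equivalent_def strong_monoidal_def
  proof (intro exI conjI ballI)
    show "is_equivalence ?C ?D M.FoL M.FmL" by (rule eq)
    have u: "M.FoL (lift_unit K k E v) = mnd_unit K k t"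
      by (simp add: lift_unit_def FoL mnd_unit_def unit_F)
    show "is_iso ?D (mnd_unit K k t) (M.FoL (lift_unit K k E v)) (\<one> (id1 K k))"
      using isoid[OF unit_obj] u by (simp add: lift_unit_def FoL cidD)
  next
    fix A B assume a: "A \<in> cobj ?C" "B \<in> cobj ?C"
    then have a': "A \<in> lift_obj K k E v k E v" "B \<in> lift_obj K k E v k E v" by (simp_all add: M.cobjs)
    have to: "lift_tensor K A B \<in> lift_obj K k E v k E v"
      by (rule M.tup4[of A], rule M.tup4[of B]) (use a' in \<open>simp add: tens_obj\<close>)
    show "is_iso ?D (mnd_tensor K (M.FoL A) (M.FoL B)) (M.FoL (lift_tensor K A B)) (cid ?D (M.FoL (lift_tensor K A B)))"
      using isoid[OF to] tensF[OF a'] by simp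
  next
    fix A B A' B' f g assume a: "A \<in> cobj ?C" "B \<in> cobj ?C" "A' \<in> cobj ?C" "B' \<in> cobj ?C"
      "f \<in> chom ?C A A'" "g \<in> chom ?C B B'"
    then have a': "A \<in> lift_obj K k E v k E v" "B \<in> lift_obj K k E v k E v" "A' \<in> lift_obj K k E v k E v" "B' \<in> lift_obj K k E v k E v" by (simp_all add: M.cobjs)
    show "ccomp ?D (M.FmL (lift_tensor K A B) (lift_tensor K A' B') (lift_tensor_arr K f g)) (cid ?D (M.FoL (lift_tensor K A B))) =
          ccomp ?D (cid ?D (M.FoL (lift_tensor K A' B'))) (hcomp K (M.FmL A A' f) (M.FmL B B' g))"
      apply (rule M.tup4[of A], rule M.tup4[of B], rule M.tup4[of A'], rule M.tup4[of B'], cases f, cases g)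
      using a' a(5,6) Vt by (auto simp: LiftI_def M.FmL_def FoL cidD ccD lift_tensor_def lift_tensor_arr_def hom2_def)
  next
    fix A B X assume a: "A \<in> cobj ?C" "B \<in> cobj ?C" "X \<in> cobj ?C"
    then have a': "A \<in> lift_obj K k E v k E v" "B \<in> lift_obj K k E v k E v" "X \<in> lift_obj K k E v k E v" by (simp_all add: M.cobjs)
    show "ccomp ?D (cid ?D (M.FoL (lift_tensor K (lift_tensor K A B) X))) (hcomp K (cid ?D (M.FoL (lift_tensor K A B))) (cid ?D (M.FoL X))) =
          ccomp ?D (cid ?D (M.FoL (lift_tensor K A (lift_tensor K B X)))) (hcomp K (cid ?D (M.FoL A)) (cid ?D (M.FoL (lift_tensor K B X))))"
      apply (rule M.tup4[of A], rule M.tup4[of B], rule M.tup4[of X])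
      using a' Vt by (auto simp: FoL cidD ccD lift_tensor_def)
  next
    fix A assume a: "A \<in> cobj ?C"
    then have a': "A \<in> lift_obj K k E v k E v" by (simp_all add: M.cobjs)
    show "ccomp ?D (cid ?D (M.FoL (lift_tensor K (lift_unit K k E v) A))) (hcomp K (\<one> (id1 K k)) (cid ?D (M.FoL A))) = cid ?D (M.FoL A)"
      apply (rule M.tup4[of A])
      using a' Vt by (auto simp: FoL cidD ccD lift_tensor_def lift_unit_def)
    show "ccomp ?D (cid ?D (M.FoL (lift_tensor K A (lift_unit K k E v)))) (hcomp K (cid ?D (M.FoL A)) (\<one> (id1 K k))) = cid ?D (M.FoL A)"
      apply (rule M.tup4[of A])
      using a' Vt by (auto simp: FoL cidD ccD lift_tensor_def lift_unit_def)
  qed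
qed

end

context mono
begin

lemma sm_P: assumes sp: "idempotents_split K"
  shows "monoidally_equivalent
           (LiftP K k E v k E v) (lift_tensor K) (lift_tensor_arr K) (lift_unit K k E v)
           (MndP K k t \<mu> \<eta> k t \<mu> \<eta>) (mnd_tensor K) (hcomp K) (mnd_unit K k t)"
proof -
  let ?C = "LiftP K k E v k E v" and ?D = "MndP K k t \<mu> \<eta> k t \<mu> \<eta>"
  have eq: "is_equivalence ?C ?D M.FoL M.FmL" by (rule M.equivP[OF sp])
  then have F: "is_functor ?C ?D M.FoL M.FmL" unfolding is_equivalence_def by blast
  have ccD: "ccomp ?D = vcomp K" by (simp add: MndP_def)
  have cidD: "\<And>V \<phi>. cid ?D (V,\<phi>) = \<one> V" by (simp add: MndP_def)
  have FoL: "\<And>V Vb \<iota> \<pi>. M.FoL (V,Vb,\<iota>,\<pi>) = (V, M.psiG V Vb \<iota> \<pi>)" by (simp add: M.FoL_def)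
  have idD: "\<And>A. A \<in> lift_obj K k E v k E v \<Longrightarrow> cid ?D (M.FoL A) \<in> chom ?D (M.FoL A) (M.FoL A)"
  proof -
    fix A assume a: "A \<in> lift_obj K k E v k E v"
    have "cid ?C A \<in> chom ?C A A"
      by (rule M.tup4[of A]) (use a in \<open>simp add: M.cid_L lob.cidP[OF M.lob_i]\<close>)
    note Fd = F[unfolded is_functor_def M.cobjs]
    have h1: "M.FmL A A (cid ?C A) \<in> chom ?D (M.FoL A) (M.FoL A)"
      using Fd[THEN conjunct2, THEN conjunct1] a \<open>cid ?C A \<in> chom ?C A A\<close> by blast
    have h2: "M.FmL A A (cid ?C A) = cid ?D (M.FoL A)"
      using Fd[THEN conjunct2, THEN conjunct2, THEN conjunct2] a by blast
    show "cid ?D (M.FoL A) \<in> chom ?D (M.FoL A) (M.FoL A)" using h1 h2 by simp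
  qed
  have isoid: "\<And>A. A \<in> lift_obj K k E v k E v \<Longrightarrow> is_iso ?D (M.FoL A) (M.FoL A) (cid ?D (M.FoL A))"
  proof -
    fix A assume a: "A \<in> lift_obj K k E v k E v"
    show "is_iso ?D (M.FoL A) (M.FoL A) (cid ?D (M.FoL A))"
    proof (rule M.tup4[of A])
      fix V Vb \<iota> \<pi> assume e: "A = (V,Vb,\<iota>,\<pi>)"
      have "V \<in> arr K" using a e unfolding lift_obj_def hom1_def by auto
      then show ?thesis unfolding is_iso_def using idD[OF a] e
        by (intro conjI bexI[of _ "cid ?D (M.FoL A)"]) (simp_all add: FoL cidD ccD)
    qed
  qed
  have Vt: "\<And>V Vb \<iota> \<pi>. (V,Vb,\<iota>,\<pi>) \<in> lift_obj K k E v k E v \<Longrightarrow> V \<in> arr K \<and> src1 K V = k \<and> tgt1 K V = k"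
    unfolding lift_obj_def hom1_def by auto
  have tensF: "\<And>A B. A \<in> lift_obj K k E v k E v \<Longrightarrow> B \<in> lift_obj K k E v k E v \<Longrightarrow>
      mnd_tensor K (M.FoL A) (M.FoL B) = M.FoL (lift_tensor K A B)"
  proof -
    fix A B assume a: "A \<in> lift_obj K k E v k E v" "B \<in> lift_obj K k E v k E v"
    show "mnd_tensor K (M.FoL A) (M.FoL B) = M.FoL (lift_tensor K A B)"
      by (rule M.tup4[of A], rule M.tup4[of B]) (use a in \<open>simp add: FoL mnd_tensor_def lift_tensor_def wl_wr tens_F\<close>)
  qed
  show ?thesis unfolding monoidally_equivalent_def strong_monoidal_def
  proof (intro exI conjI ballI)
    show "is_equivalence ?C ?D M.FoL M.FmL" by (rule eq)
    have u: "M.FoL (lift_unit K k E v) = mnd_unit K k t"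
      by (simp add: lift_unit_def FoL mnd_unit_def unit_F)
    show "is_iso ?D (mnd_unit K k t) (M.FoL (lift_unit K k E v)) (\<one> (id1 K k))"
      using isoid[OF unit_obj] u by (simp add: lift_unit_def FoL cidD)
  next
    fix A B assume a: "A \<in> cobj ?C" "B \<in> cobj ?C"
    then have a': "A \<in> lift_obj K k E v k E v" "B \<in> lift_obj K k E v k E v" by (simp_all add: M.cobjs)
    have to: "lift_tensor K A B \<in> lift_obj K k E v k E v"
      by (rule M.tup4[of A], rule M.tup4[of B]) (use a' in \<open>simp add: tens_obj\<close>)
    show "is_iso ?D (mnd_tensor K (M.FoL A) (M.FoL B)) (M.FoL (lift_tensor K A B)) (cid ?D (M.FoL (lift_tensor K A B)))"
      using isoid[OF to] tensF[OF a'] by simp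
  next
    fix A B A' B' f g assume a: "A \<in> cobj ?C" "B \<in> cobj ?C" "A' \<in> cobj ?C" "B' \<in> cobj ?C"
      "f \<in> chom ?C A A'" "g \<in> chom ?C B B'"
    then have a': "A \<in> lift_obj K k E v k E v" "B \<in> lift_obj K k E v k E v" "A' \<in> lift_obj K k E v k E v" "B' \<in> lift_obj K k E v k E v" by (simp_all add: M.cobjs)
    show "ccomp ?D (M.FmL (lift_tensor K A B) (lift_tensor K A' B') (lift_tensor_arr K f g)) (cid ?D (M.FoL (lift_tensor K A B))) =
          ccomp ?D (cid ?D (M.FoL (lift_tensor K A' B'))) (hcomp K (M.FmL A A' f) (M.FmL B B' g))"
      apply (rule M.tup4[of A], rule M.tup4[of B], rule M.tup4[of A'], rule M.tup4[of B'], cases f, cases g)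
      using a' a(5,6) Vt by (auto simp: LiftP_def M.FmL_def FoL cidD ccD lift_tensor_def lift_tensor_arr_def hom2_def)
  next
    fix A B X assume a: "A \<in> cobj ?C" "B \<in> cobj ?C" "X \<in> cobj ?C"
    then have a': "A \<in> lift_obj K k E v k E v" "B \<in> lift_obj K k E v k E v" "X \<in> lift_obj K k E v k E v" by (simp_all add: M.cobjs)
    show "ccomp ?D (cid ?D (M.FoL (lift_tensor K (lift_tensor K A B) X))) (hcomp K (cid ?D (M.FoL (lift_tensor K A B))) (cid ?D (M.FoL X))) =
          ccomp ?D (cid ?D (M.FoL (lift_tensor K A (lift_tensor K B X)))) (hcomp K (cid ?D (M.FoL A)) (cid ?D (M.FoL (lift_tensor K B X))))"
      apply (rule M.tup4[of A], rule M.tup4[of B], rule M.tup4[of X])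
      using a' Vt by (auto simp: FoL cidD ccD lift_tensor_def)
  next
    fix A assume a: "A \<in> cobj ?C"
    then have a': "A \<in> lift_obj K k E v k E v" by (simp_all add: M.cobjs)
    show "ccomp ?D (cid ?D (M.FoL (lift_tensor K (lift_unit K k E v) A))) (hcomp K (\<one> (id1 K k)) (cid ?D (M.FoL A))) = cid ?D (M.FoL A)"
      apply (rule M.tup4[of A])
      using a' Vt by (auto simp: FoL cidD ccD lift_tensor_def lift_unit_def)
    show "ccomp ?D (cid ?D (M.FoL (lift_tensor K A (lift_unit K k E v)))) (hcomp K (cid ?D (M.FoL A)) (\<one> (id1 K k))) = cid ?D (M.FoL A)"
      apply (rule M.tup4[of A])
      using a' Vt by (auto simp: FoL cidD ccD lift_tensor_def lift_unit_def)
  qed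
qed

end


theorem theorem4p4:
  fixes K :: "('o,'m,'c) twocat"
  assumes "twocat K"
    and "admits_EM K"
    and "idempotents_split K"
    and "is_monad K k t \<mu> \<eta>"
    and "is_monad K k' t' \<mu>' \<eta>'"
    and "is_EM K k t \<mu> \<eta> E v \<psi>"
    and "is_EM K k' t' \<mu>' \<eta>' E' v' \<psi>'"
  shows "equivalent_cats (LiftI K k E v k' E' v') (MndI K k t \<mu> \<eta> k' t' \<mu>' \<eta>')
       \<and> equivalent_cats (LiftP K k E v k' E' v') (MndP K k t \<mu> \<eta> k' t' \<mu>' \<eta>')
       \<and> monoidally_equivalent
           (LiftI K k E v k E v) (lift_tensor K) (lift_tensor_arr K) (lift_unit K k E v)
           (MndI K k t \<mu> \<eta> k t \<mu> \<eta>) (mnd_tensor K) (hcomp K) (mnd_unit K k t)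
       \<and> monoidally_equivalent
           (LiftP K k E v k E v) (lift_tensor K) (lift_tensor_arr K) (lift_unit K k E v)
           (MndP K k t \<mu> \<eta> k t \<mu> \<eta>) (mnd_tensor K) (hcomp K) (mnd_unit K k t)"
proof -
  interpret Mn: main K k t \<mu> \<eta> E v \<psi> k' t' \<mu>' \<eta>' E' v' \<psi>'
    apply unfold_locales using assms by auto
  interpret Mo: mono K k t \<mu> \<eta> E v \<psi> by unfold_locales
  show ?thesis
    unfolding equivalent_cats_def
    using Mn.equivI[OF assms(3)] Mn.equivP[OF assms(3)] Mo.sm_I[OF assms(3)] Mo.sm_P[OF assms(3)] by blast
qed


end
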